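(* Let $M$ be a root of unity toric frame of $\mathcal F$, $k\in[1,N]$, and $g=(n_1,\dots,n_N)\in\mathbb Z^N$ such that $\Lambda_M(g,e_j)\equiv0\pmod\ell$ for all $j\neq k$ and $n_k=0$. Then for each sign $s\in\{+,-\}$ there is a unique ($\mathbb Q(\varepsilon^{1/2})$-algebra) automorphism $\rho$ of $\mathcal F$ such that $\rho(M(e_k))=M(e_k)+M(e_k+sg)$ and $\rho(M(e_j))=M(e_j)$ for $j\ne k$.
   Context: Let $\ell$ be a positive integer, $\mathbb Z_\ell=\mathbb Z/\ell\mathbb Z$, $\varepsilon^{1/2}\in\mathbb C$ a primitive $\ell$-th root of unity, $\mathcal A^{1/2}_\varepsilon=\mathbb Z[\varepsilon^{1/2}]$, $\varepsilon^{a/2}=(\varepsilon^{1/2})^a$ for $a\in\mathbb Z_\ell$; $e_1,\dots,e_N$ is the standard basis of $\mathbb Z^N$. For a skew-symmetric bilinear form $\Lambda:\mathbb Z^N\times\mathbb Z^N\to\mathbb Z_\ell$, $\mathcal T_\varepsilon(\Lambda)$ is the $\mathcal A^{1/2}_\varepsilon$-algebra with basis $\{X^f\}_{f\in\mathbb Z^N}$ and $X^fX^g=\varepsilon^{\Lambda(f,g)/2}X^{f+g}$. A root of unity toric frame of a division algebra $\mathcal F$ over $\mathbb Q(\varepsilon^{1/2})$ is a map $M:\mathbb Z^N\to\mathcal F$ such that for some (unique) skew-symmetric $\Lambda=:\Lambda_M$ there is an injective $\mathcal A^{1/2}_\varepsilon$-algebra map $\phi:\mathcal T_\varepsilon(\Lambda)\to\mathcal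 F$, $\phi(X^f)=M(f)$ for all $f$, with $\mathcal F$ the skew field of fractions of its image. *)

theory Defs
  imports Complex_Main "HOL-Computational_Algebra.Polynomial" "HOL-Number_Theory.Cong" "HOL-Library.Function_Algebras"
begin

text \<open>\<zeta> plays the role of \<open>\<epsilon>^{1/2}\<close>, a primitive \<open>\<ell>\<close>-th root of unity.\<close>
definition primitive_root_of_unity :: "nat \<Rightarrow> complex \<Rightarrow> bool" where
  "primitive_root_of_unity l z \<longleftrightarrow> z ^ l = 1 \<and> (\<forall>m. 0 < m \<and> m < l \<longrightarrow> z ^ m \<noteq> 1)"

text \<open>The ring \<open>\<A>^{1/2}_\<epsilon> = \<int>[\<zeta>]\<close> and the field \<open>\<rat>(\<zeta>)\<close> (as subsets of \<open>\<complex>\<close>).\<close>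
definition Zring :: "complex \<Rightarrow> complex set" where
  "Zring z = {poly (map_poly of_int p) z | p :: int poly. True}"

definition Qfield :: "complex \<Rightarrow> complex set" where
  "Qfield z = {x. \<exists>p q :: rat poly. poly (map_poly of_rat q) z \<noteq> 0 \<and>
                  x = poly (map_poly of_rat p) z / poly (map_poly of_rat q) z}"

text \<open>The division ring \<open>'a\<close> is an algebra over \<open>\<rat>(\<zeta>)\<close> via the structure map \<open>\<iota>\<close>
  (a unital ring homomorphism on \<open>\<rat>(\<zeta>)\<close> with central image).\<close>
definition K_algebra :: "complex \<Rightarrow> (complex \<Rightarrow> 'a::division_ring) \<Rightarrow> bool" where
  "K_algebra z \<iota> \<longleftrightarrow> \<iota> 1 = 1 \<and>
     (\<forall>a\<in>Qfield z. \<forall>b\<in>Qfield z. \<iota> (a + b) = \<iota> a + \<iota> b \<and> \<iota> (a * b) = \<iota> a * \<iota> b) \<and>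
     (\<forall>a\<in>Qfield z. \<forall>x. \<iota> a * x = x * \<iota> a)"

text \<open>Standard basis vector \<open>e_j\<close> of \<open>\<int>^N\<close>, with \<open>\<int>^N\<close> = \<open>'n \<Rightarrow> int\<close>, \<open>N = CARD('n)\<close>.\<close>
definition ebasis :: "'n \<Rightarrow> ('n \<Rightarrow> int)" where
  "ebasis j = (\<lambda>i. if i = j then 1 else 0)"

text \<open>Skew-symmetric bilinear form \<open>\<int>^N \<times> \<int>^N \<rightarrow> \<int>_\<ell>\<close>, represented by integer representatives.\<close>
definition skew_bilinear_mod :: "nat \<Rightarrow> (('n \<Rightarrow> int) \<Rightarrow> ('n \<Rightarrow> int) \<Rightarrow> int) \<Rightarrow> bool" where
  "skew_bilinear_mod l \<Lambda> \<longleftrightarrow>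
     (\<forall>f g h. [\<Lambda> (f + g) h = \<Lambda> f h + \<Lambda> g h] (mod int l)) \<and>
     (\<forall>f g h. [\<Lambda> f (g + h) = \<Lambda> f g + \<Lambda> f h] (mod int l)) \<and>
     (\<forall>f g. [\<Lambda> f g = - \<Lambda> g f] (mod int l))"

text \<open>Image of the quantum torus \<open>\<T>_\<epsilon>(\<Lambda>)\<close> under \<open>\<phi>(\<Sum> c_f X^f) = \<Sum> \<iota>(c_f) M(f)\<close>.\<close>
definition torus_image :: "complex \<Rightarrow> (complex \<Rightarrow> 'a::division_ring) \<Rightarrow> (('n \<Rightarrow> int) \<Rightarrow> 'a) \<Rightarrow> 'a set" where
  "torus_image z \<iota> M = {(\<Sum>f\<in>S. \<iota> (c f) * M f) | S c. finite S \<and> (\<forall>f\<in>S. c f \<in> Zring z)}"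

text \<open>\<open>M\<close> is a root of unity toric frame with form \<open>\<Lambda>_M = \<Lambda>\<close>: the \<open>\<A>^{1/2}_\<epsilon>\<close>-linear map
  \<open>\<phi> : \<T>_\<epsilon>(\<Lambda>) \<rightarrow> F\<close>, \<open>X^f \<mapsto> M(f)\<close>, is a (unital) algebra homomorphism (i.e. \<open>M 0 = 1\<close> and
  \<open>M(f) M(g) = \<epsilon>^{\<Lambda>(f,g)/2} M(f+g)\<close>), it is injective (the \<open>M(f)\<close> are \<open>\<A>^{1/2}_\<epsilon>\<close>-linearly
  independent), and \<open>F\<close> is the skew field of (right) fractions of its image.\<close>
definition toric_frame ::
  "nat \<Rightarrow> complex \<Rightarrow> (complex \<Rightarrow> 'a::division_ring) \<Rightarrow> (('n \<Rightarrow> int) \<Rightarrow> 'a)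
     \<Rightarrow> (('n \<Rightarrow> int) \<Rightarrow> ('n \<Rightarrow> int) \<Rightarrow> int) \<Rightarrow> bool" where
  "toric_frame l z \<iota> M \<Lambda> \<longleftrightarrow>
     skew_bilinear_mod l \<Lambda> \<and>
     M 0 = 1 \<and>
     (\<forall>f g. M f * M g = \<iota> (z powi \<Lambda> f g) * M (f + g)) \<and>
     (\<forall>S c. finite S \<longrightarrow> (\<forall>f\<in>S. c f \<in> Zring z) \<longrightarrow>
        (\<Sum>f\<in>S. \<iota> (c f) * M f) = 0 \<longrightarrow> (\<forall>f\<in>S. c f = 0)) \<and>
     (\<forall>x. \<exists>a\<in>torus_image z \<iota> M. \<exists>b\<in>torus_image z \<iota> M. b \<noteq> 0 \<and> x = a * inverse b)"

definition K_alg_automorphism :: "complex \<Rightarrow> (complex \<Rightarrow> 'a::division_ring) \<Rightarrow> ('a \<Rightarrow> 'a) \<Rightarrow> bool" where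
  "K_alg_automorphism z \<iota> \<rho> \<longleftrightarrow> bij \<rho> \<and> \<rho> 1 = 1 \<and>
     (\<forall>x y. \<rho> (x + y) = \<rho> x + \<rho> y) \<and> (\<forall>x y. \<rho> (x * y) = \<rho> x * \<rho> y) \<and>
     (\<forall>a\<in>Qfield z. \<forall>x. \<rho> (\<iota> a * x) = \<iota> a * \<rho> x)"

end

theory Submission
  imports Defs "HOL-Number_Theory.Cong"
begin


lemma map_poly_of_int_add: "map_poly (of_int::int\<Rightarrow>complex) (p + q) = map_poly of_int p + map_poly of_int q"
  by (intro poly_eqI) (simp add: coeff_map_poly)
lemma map_poly_of_int_mult: "map_poly (of_int::int\<Rightarrow>complex) (p * q) = map_poly of_int p * map_poly of_int q"
  by (intro poly_eqI) (simp add: coeff_map_poly coeff_mult)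
lemma map_poly_of_int_uminus: "map_poly (of_int::int\<Rightarrow>complex) (-p) = - map_poly of_int p"
  by (intro poly_eqI) (simp add: coeff_map_poly)

lemma Zring_add: "a \<in> Zring z \<Longrightarrow> b \<in> Zring z \<Longrightarrow> a + b \<in> Zring z"
proof -
  assume "a \<in> Zring z" "b \<in> Zring z"
  then obtain p q where "a = poly (map_poly of_int p) z" "b = poly (map_poly of_int q) z"
    unfolding Zring_def by blast
  then have "a + b = poly (map_poly of_int (p + q)) z" by (simp only: map_poly_of_int_add poly_add)
  then show ?thesis unfolding Zring_def by blast
qed
lemma Zring_mult: "a \<in> Zring z \<Longrightarrow> b \<in> Zring z \<Longrightarrow> a * b \<in> Zring z"
proof -
  assume "a \<in> Zring z" "b \<in> Zring z"
  then obtain p q where "a = poly (map_poly of_int p) z" "b = poly (map_poly of_int q) z"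
    unfolding Zring_def by blast
  then have "a * b = poly (map_poly of_int (p * q)) z" by (simp only: map_poly_of_int_mult poly_mult)
  then show ?thesis unfolding Zring_def by blast
qed
lemma Zring_uminus: "a \<in> Zring z \<Longrightarrow> - a \<in> Zring z"
proof -
  assume "a \<in> Zring z"
  then obtain p where "a = poly (map_poly of_int p) z"
    unfolding Zring_def by blast
  then have "- a = poly (map_poly of_int (- p)) z" by (simp only: map_poly_of_int_uminus poly_minus)
  then show ?thesis unfolding Zring_def by blast
qed
lemma Zring_diff: "a \<in> Zring z \<Longrightarrow> b \<in> Zring z \<Longrightarrow> a - b \<in> Zring z"
  using Zring_add[of a z "-b"] Zring_uminus[of b z] by simp
lemma Zring_of_int: "of_int n \<in> Zring z"
  unfolding Zring_def by (auto intro!: exI[of _ "[:n:]"] simp: map_poly_pCons)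
lemma Zring_0: "0 \<in> Zring z" using Zring_of_int[of 0 z] by simp
lemma Zring_1: "1 \<in> Zring z" using Zring_of_int[of 1 z] by simp
lemma Zring_z: "z \<in> Zring z"
  unfolding Zring_def by (auto intro!: exI[of _ "[:0,1:]"] simp: map_poly_pCons)
lemma Zring_power: "z ^ n \<in> Zring z"
  by (induction n) (auto intro: Zring_mult Zring_1 Zring_z)
lemma Zring_sum_list: "(\<And>x. x \<in> set xs \<Longrightarrow> x \<in> Zring z) \<Longrightarrow> sum_list xs \<in> Zring z"
  by (induction xs) (auto intro: Zring_add Zring_0)

lemma Zring_Qfield: "a \<in> Zring z \<Longrightarrow> a \<in> Qfield z"
  unfolding Zring_def Qfield_def
  apply clarsimp
  subgoal for p
    apply (rule exI[of _ "map_poly of_int p"])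
    apply (rule exI[of _ 1])
    by (simp add: map_poly_map_poly o_def)
  done

locale frame =
  fixes l :: nat and z :: complex and \<iota> :: "complex \<Rightarrow> 'a::division_ring"
    and M :: "('n::finite \<Rightarrow> int) \<Rightarrow> 'a" and \<Lambda> :: "('n \<Rightarrow> int) \<Rightarrow> ('n \<Rightarrow> int) \<Rightarrow> int"
  assumes l_pos: "0 < l" and prim: "primitive_root_of_unity l z" and Kalg: "K_algebra z \<iota>"
    and TF: "toric_frame l z \<iota> M \<Lambda>"
begin

lemma zl: "z ^ l = 1" using prim unfolding primitive_root_of_unity_def by simp
lemma z_nz: "z \<noteq> 0" using zl l_pos by (cases "z = 0") (auto simp: zero_power)

lemma powi_cong: assumes "[a = b] (mod int l)" shows "z powi a = z powi b"
proof -
  obtain t where b: "b = a + int l * t" using assms cong_iff_lin by blast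
  have "z powi (int l * t) = (z powi int l) powi t" by (rule power_int_mult)
  also have "\<dots> = 1" using zl by (simp add: power_int_of_nat)
  finally show ?thesis using z_nz by (simp add: b power_int_add)
qed

lemma powi_add: "z powi (a + b) = z powi a * z powi b"
  using z_nz by (simp add: power_int_add)
lemma powi_nz: "z powi a \<noteq> 0"
  using z_nz by (simp add: power_int_not_zero)
lemma powi_minus_mult: "z powi (- a) * z powi a = 1"
  using z_nz by (simp add: power_int_minus)

lemma Zring_powi: "z powi n \<in> Zring z"
proof -
  have "[n mod int l = n] (mod int l)" by (simp add: cong_def)
  then have "z powi n = z powi (n mod int l)" using powi_cong by metis
  also have "\<dots> = z ^ nat (n mod int l)"
    using l_pos by (simp add: power_int_def)
  finally show ?thesis using Zring_power by simp
qed

lemma skew: "skew_bilinear_mod l \<Lambda>" using TF unfolding toric_frame_def by blast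
lemma M0: "M 0 = 1" using TF unfolding toric_frame_def by blast
lemma Mmult: "M f * M g = \<iota> (z powi \<Lambda> f g) * M (f + g)" using TF unfolding toric_frame_def by blast
lemma indep: "finite S \<Longrightarrow> (\<forall>f\<in>S. c f \<in> Zring z) \<Longrightarrow> (\<Sum>f\<in>S. \<iota> (c f) * M f) = 0 \<Longrightarrow> f \<in> S \<Longrightarrow> c f = 0"
  using TF unfolding toric_frame_def by blast
lemma frac: "\<exists>a\<in>torus_image z \<iota> M. \<exists>b\<in>torus_image z \<iota> M. b \<noteq> 0 \<and> x = a * inverse b"
  using TF unfolding toric_frame_def by blast

lemma Lam_add1: "[\<Lambda> (f + g) h = \<Lambda> f h + \<Lambda> g h] (mod int l)"
  using skew unfolding skew_bilinear_mod_def by blast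
lemma Lam_add2: "[\<Lambda> f (g + h) = \<Lambda> f g + \<Lambda> f h] (mod int l)"
  using skew unfolding skew_bilinear_mod_def by blast
lemma Lam_skew: "[\<Lambda> f g = - \<Lambda> g f] (mod int l)"
  using skew unfolding skew_bilinear_mod_def by blast

lemma \<iota>1: "\<iota> 1 = 1" using Kalg unfolding K_algebra_def by blast
lemma \<iota>_add: "a \<in> Zring z \<Longrightarrow> b \<in> Zring z \<Longrightarrow> \<iota> (a + b) = \<iota> a + \<iota> b"
  using Kalg Zring_Qfield unfolding K_algebra_def by blast
lemma \<iota>_mult: "a \<in> Zring z \<Longrightarrow> b \<in> Zring z \<Longrightarrow> \<iota> (a * b) = \<iota> a * \<iota> b"
  using Kalg Zring_Qfield unfolding K_algebra_def by blast
lemma \<iota>_central: "a \<in> Zring z \<Longrightarrow> \<iota> a * x = x * \<iota> a"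
  using Kalg Zring_Qfield unfolding K_algebra_def by blast
lemma \<iota>_centralQ: "a \<in> Qfield z \<Longrightarrow> \<iota> a * x = x * \<iota> a"
  using Kalg unfolding K_algebra_def by blast
lemma \<iota>0: "\<iota> 0 = 0"
  using \<iota>_add[OF Zring_0 Zring_0] by simp
lemma \<iota>_uminus: "a \<in> Zring z \<Longrightarrow> \<iota> (- a) = - \<iota> a"
  using \<iota>_add[of a "-a"] Zring_uminus[of a z] \<iota>0 by (metis add.commute eq_neg_iff_add_eq_0)
lemma \<iota>_diff: "a \<in> Zring z \<Longrightarrow> b \<in> Zring z \<Longrightarrow> \<iota> (a - b) = \<iota> a - \<iota> b"
  using \<iota>_add[of a "-b"] \<iota>_uminus[of b] Zring_uminus[of b z] by simp

lemma \<iota>_nz: assumes "a \<in> Zring z" "a \<noteq> 0" shows "\<iota> a \<noteq> 0"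
proof
  assume "\<iota> a = 0"
  then have "(\<Sum>f\<in>{0}. \<iota> ((\<lambda>_. a) f) * M f) = 0" by simp
  from indep[OF _ _ this] assms show False by auto
qed

lemma M_nz: "M f \<noteq> 0"
proof
  assume "M f = 0"
  then have "(\<Sum>f'\<in>{f}. \<iota> ((\<lambda>_. 1) f') * M f') = 0" by (simp add: \<iota>1)
  from indep[OF _ _ this] show False by (auto simp: Zring_1)
qed

lemma \<iota>_powi_add: "\<iota> (z powi (a + b)) = \<iota> (z powi a) * \<iota> (z powi b)"
  by (simp add: powi_add \<iota>_mult Zring_powi)
lemma \<iota>_powi_0: "\<iota> (z powi 0) = 1" by (simp add: \<iota>1)
lemma \<iota>_powi_inv: "\<iota> (z powi (- a)) * \<iota> (z powi a) = 1"
  using \<iota>_powi_add[of "-a" a] by (simp add: \<iota>1)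
lemma \<iota>_powi_cong: "[a = b] (mod int l) \<Longrightarrow> \<iota> (z powi a) = \<iota> (z powi b)"
  using powi_cong by metis

lemma M_add: "M (f + g) = \<iota> (z powi (- \<Lambda> f g)) * (M f * M g)"
  by (simp add: Mmult mult.assoc[symmetric] \<iota>_powi_inv)


lemma Lam_zero2: "[\<Lambda> f 0 = 0] (mod int l)"
proof -
  have "[\<Lambda> f (0 + 0) = \<Lambda> f 0 + \<Lambda> f 0] (mod int l)" by (rule Lam_add2)
  then have "int l dvd (\<Lambda> f 0 - (\<Lambda> f 0 + \<Lambda> f 0))" by (simp add: cong_iff_dvd_diff)
  moreover have "\<Lambda> f 0 - (\<Lambda> f 0 + \<Lambda> f 0) = - \<Lambda> f 0" by simp
  ultimately have "int l dvd \<Lambda> f 0" by (simp only: dvd_minus_iff)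
  then show ?thesis by (simp add: cong_0_iff)
qed

lemma Lam_zero1: "[\<Lambda> 0 f = 0] (mod int l)"
proof -
  have "[\<Lambda> 0 f = - \<Lambda> f 0] (mod int l)" by (rule Lam_skew)
  moreover have "[- \<Lambda> f 0 = - 0] (mod int l)" using Lam_zero2 by (simp only: cong_minus_minus_iff)
  ultimately have "[\<Lambda> 0 f = - 0] (mod int l)" by (rule cong_trans)
  then show ?thesis by simp
qed

lemma Lam_sum2: "finite A \<Longrightarrow> [\<Lambda> f (\<Sum>j\<in>A. F j) = (\<Sum>j\<in>A. \<Lambda> f (F j))] (mod int l)"
proof (induction A rule: finite_induct)
  case empty show ?case unfolding sum.empty by (rule Lam_zero2)
next
  case (insert x A)
  have "[\<Lambda> f (F x + (\<Sum>j\<in>A. F j)) = \<Lambda> f (F x) + \<Lambda> f (\<Sum>j\<in>A. F j)] (mod int l)" by (rule Lam_add2)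
  also have "[\<Lambda> f (F x) + \<Lambda> f (\<Sum>j\<in>A. F j) = \<Lambda> f (F x) + (\<Sum>j\<in>A. \<Lambda> f (F j))] (mod int l)"
    using insert.IH by (intro cong_add) auto
  finally show ?case unfolding sum.insert[OF insert(1,2)] .
qed

lemma Lam_smult2_nat: "[\<Lambda> f (\<lambda>i. int n * v i) = int n * \<Lambda> f v] (mod int l)"
proof (induction n)
  case 0
  have "(\<lambda>i. int 0 * v i) = 0" by (simp add: fun_eq_iff)
  then show ?case using Lam_zero2 by simp
next
  case (Suc n)
  have e: "(\<lambda>i. int (Suc n) * v i) = (\<lambda>i. int n * v i) + v" by (auto simp: algebra_simps)
  have "[\<Lambda> f ((\<lambda>i. int n * v i) + v) = \<Lambda> f (\<lambda>i. int n * v i) + \<Lambda> f v] (mod int l)" by (rule Lam_add2)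
  also have "[\<Lambda> f (\<lambda>i. int n * v i) + \<Lambda> f v = int n * \<Lambda> f v + \<Lambda> f v] (mod int l)"
    using Suc by (intro cong_add) auto
  finally have "[\<Lambda> f (\<lambda>i. int (Suc n) * v i) = int n * \<Lambda> f v + \<Lambda> f v] (mod int l)"
    by (simp only: e)
  then show ?case by (simp add: algebra_simps)
qed

lemma Lam_neg2: "[\<Lambda> f (- v) = - \<Lambda> f v] (mod int l)"
proof -
  have "[\<Lambda> f (v + - v) = \<Lambda> f v + \<Lambda> f (- v)] (mod int l)" by (rule Lam_add2)
  then have "[\<Lambda> f v + \<Lambda> f (- v) = 0] (mod int l)" using Lam_zero2[of f]
    by (simp add: cong_sym_eq) (meson cong_sym cong_trans)
  then have "int l dvd (\<Lambda> f v + \<Lambda> f (- v))" by (simp add: cong_0_iff)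
  then show ?thesis by (simp add: cong_iff_dvd_diff add.commute)
qed

lemma Lam_smult2: "[\<Lambda> f (\<lambda>i. n * v i) = n * \<Lambda> f v] (mod int l)"
proof (cases "n \<ge> 0")
  case True
  define m where "m = nat n"
  have "n = int m" using True by (simp add: m_def)
  then show ?thesis using Lam_smult2_nat by simp
next
  case False
  define m where "m = nat (- n)"
  have n: "n = - int m" using False by (simp add: m_def)
  have e: "(\<lambda>i. n * v i) = - (\<lambda>i. int m * v i)" by (auto simp: n)
  have "[\<Lambda> f (- (\<lambda>i. int m * v i)) = - \<Lambda> f (\<lambda>i. int m * v i)] (mod int l)" by (rule Lam_neg2)
  also have "[- \<Lambda> f (\<lambda>i. int m * v i) = - (int m * \<Lambda> f v)] (mod int l)"
    using Lam_smult2_nat cong_minus_minus_iff by blast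
  finally have "[\<Lambda> f (- (\<lambda>i. int m * v i)) = - (int m * \<Lambda> f v)] (mod int l)" .
  moreover have "n * \<Lambda> f v = - (int m * \<Lambda> f v)" by (simp add: n)
  ultimately show ?thesis by (simp only: e)
qed

lemma sum_fun_apply: "finite A \<Longrightarrow> (\<Sum>j\<in>A. (F j :: 'n \<Rightarrow> int)) i = (\<Sum>j\<in>A. F j i)"
  by (induction A rule: finite_induct) auto

lemma fun_decomp: "(v::'n \<Rightarrow> int) = (\<Sum>j\<in>UNIV. (\<lambda>i. v j * ebasis j i))"
proof (rule ext)
  fix i
  have "(\<Sum>j\<in>UNIV. (\<lambda>i. v j * ebasis j i)) i = (\<Sum>j\<in>UNIV. v j * ebasis j i)"
    by (rule sum_fun_apply) simp
  also have "\<dots> = (\<Sum>j\<in>UNIV. if i = j then v j else 0)"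
    by (rule sum.cong) (auto simp: ebasis_def)
  also have "\<dots> = v i" by simp
  finally show "v i = (\<Sum>j\<in>UNIV. (\<lambda>i. v j * ebasis j i)) i" by simp
qed

lemma Lam_expand2: "[\<Lambda> f v = (\<Sum>j\<in>UNIV. v j * \<Lambda> f (ebasis j))] (mod int l)"
proof -
  have "[\<Lambda> f (\<Sum>j\<in>UNIV. (\<lambda>i. v j * ebasis j i)) = (\<Sum>j\<in>UNIV. \<Lambda> f (\<lambda>i. v j * ebasis j i))] (mod int l)"
    by (rule Lam_sum2) simp
  also have "[(\<Sum>j\<in>UNIV. \<Lambda> f (\<lambda>i. v j * ebasis j i)) = (\<Sum>j\<in>UNIV. v j * \<Lambda> f (ebasis j))] (mod int l)"
    by (rule cong_sum) (rule Lam_smult2)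
  finally show ?thesis using fun_decomp[of v] by simp
qed

lemma cong_sum_single:
  assumes "\<forall>j. j \<noteq> k \<longrightarrow> [F j = 0] (mod int l)"
  shows "[(\<Sum>j\<in>(UNIV::'n set). F j) = F k] (mod int l)"
proof -
  have "[(\<Sum>j\<in>(UNIV::'n set). F j) = (\<Sum>j\<in>(UNIV::'n set). if j = k then F k else 0)] (mod int l)"
    using assms by (intro cong_sum) (auto simp: cong_refl)
  then show ?thesis by simp
qed

lemma Lam_neg1: "[\<Lambda> (- f) v = - \<Lambda> f v] (mod int l)"
proof -
  have "[\<Lambda> (- f) v = - \<Lambda> v (- f)] (mod int l)" by (rule Lam_skew)
  also have "[- \<Lambda> v (- f) = - (- \<Lambda> v f)] (mod int l)" using Lam_neg2 cong_minus_minus_iff by blast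
  also have "[- (- \<Lambda> v f) = - \<Lambda> f v] (mod int l)"
    using Lam_skew[of v f] by (simp add: cong_minus_minus_iff)
  finally show ?thesis .
qed


end


locale frame2 = frame l z \<iota> M \<Lambda>
  for l :: nat and z :: complex and \<iota> :: "complex \<Rightarrow> 'a::division_ring"
    and M :: "('n::finite \<Rightarrow> int) \<Rightarrow> 'a" and \<Lambda> :: "('n \<Rightarrow> int) \<Rightarrow> ('n \<Rightarrow> int) \<Rightarrow> int" +
  fixes k :: 'n and g :: "'n \<Rightarrow> int" and s :: int
  assumes gk: "\<forall>j. j \<noteq> k \<longrightarrow> [\<Lambda> g (ebasis j) = 0] (mod int l)"
    and g_k: "g k = 0" and s: "s \<in> {1, -1}"
begin

definition "h = (\<lambda>i. s * g i)"
definition "X = M h"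
definition "a = \<Lambda> h (ebasis k)"
definition "b = - \<Lambda> (ebasis k) h"
definition "Q x = 1 + \<iota> (z powi (b + 2 * a * x)) * X"

lemma h_k: "h k = 0" by (simp add: h_def g_k)

lemma h_cases: "h = g \<or> h = - g"
  using s by (auto simp: h_def fun_eq_iff)

lemma Lam_h_ej: "j \<noteq> k \<Longrightarrow> [\<Lambda> h (ebasis j) = 0] (mod int l)"
proof -
  assume j: "j \<noteq> k"
  show ?thesis
  proof (cases "h = g")
    case True
    have "[\<Lambda> g (ebasis j) = 0] (mod int l)" using gk j by blast
    then show ?thesis using True by simp
  next
    case False
    then have hg: "h = - g" using h_cases by blast
    have "[\<Lambda> (- g) (ebasis j) = - \<Lambda> g (ebasis j)] (mod int l)" by (rule Lam_neg1)
    also have "[- \<Lambda> g (ebasis j) = - 0] (mod int l)"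
    proof -
      have "[\<Lambda> g (ebasis j) = 0] (mod int l)" using gk j by blast
      then show ?thesis by (simp only: cong_minus_minus_iff)
    qed
    finally show ?thesis by (simp add: hg)
  qed
qed

lemma Lam_h_v: "[\<Lambda> h v = v k * a] (mod int l)"
proof -
  have "[\<Lambda> h v = (\<Sum>j\<in>UNIV. v j * \<Lambda> h (ebasis j))] (mod int l)" by (rule Lam_expand2)
  also have "[(\<Sum>j\<in>UNIV. v j * \<Lambda> h (ebasis j)) = v k * \<Lambda> h (ebasis k)] (mod int l)"
  proof (rule cong_sum_single, intro allI impI)
    fix j assume "j \<noteq> k"
    then have "[v j * \<Lambda> h (ebasis j) = v j * 0] (mod int l)" using Lam_h_ej by (intro cong_scalar_left)
    then show "[v j * \<Lambda> h (ebasis j) = 0] (mod int l)" by simp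
  qed
  finally show ?thesis by (simp add: a_def)
qed

lemma comm_exp: "[\<Lambda> h v - \<Lambda> v h = 2 * v k * a] (mod int l)"
proof -
  have "[\<Lambda> h v - \<Lambda> v h = \<Lambda> h v - (- \<Lambda> h v)] (mod int l)"
    using Lam_skew[of v h] by (intro cong_diff) auto
  also have "\<Lambda> h v - (- \<Lambda> h v) = 2 * \<Lambda> h v" by simp
  also have "[2 * \<Lambda> h v = 2 * (v k * a)] (mod int l)" using Lam_h_v by (intro cong_scalar_left)
  finally show ?thesis by (simp add: mult.assoc)
qed

lemma X_comm: "X * M v = \<iota> (z powi (2 * v k * a)) * M v * X"
proof -
  have 1: "X * M v = \<iota> (z powi \<Lambda> h v) * M (h + v)" by (simp add: X_def Mmult)
  have 2: "M v * X = \<iota> (z powi \<Lambda> v h) * M (h + v)" by (simp add: X_def Mmult add.commute)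
  have "\<iota> (z powi (2 * v k * a)) * M v * X = \<iota> (z powi (\<Lambda> h v - \<Lambda> v h)) * (M v * X)"
    using \<iota>_powi_cong[OF comm_exp[of v]] by (simp add: mult.assoc)
  also have "\<dots> = \<iota> (z powi (\<Lambda> h v + - \<Lambda> v h)) * \<iota> (z powi \<Lambda> v h) * M (h + v)"
    by (simp add: 2 mult.assoc)
  also have "\<dots> = \<iota> (z powi \<Lambda> h v) * M (h + v)"
    by (simp only: \<iota>_powi_add mult.assoc \<iota>_powi_inv) simp
  finally show ?thesis using 1 by simp
qed

lemma \<iota>_powi_central: "\<iota> (z powi n) * x = x * \<iota> (z powi n)"
  by (rule \<iota>_central[OF Zring_powi])

lemma Q_shift: "Q x * M v = M v * Q (x + v k)"
proof -
  have "Q x * M v = M v + \<iota> (z powi (b + 2 * a * x)) * (X * M v)"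
    by (simp add: Q_def distrib_right mult.assoc)
  also have "\<dots> = M v + \<iota> (z powi (b + 2 * a * x)) * \<iota> (z powi (2 * v k * a)) * M v * X"
    by (simp add: X_comm mult.assoc)
  also have "\<iota> (z powi (b + 2 * a * x)) * \<iota> (z powi (2 * v k * a)) = \<iota> (z powi (b + 2 * a * (x + v k)))"
    by (simp add: \<iota>_powi_add[symmetric] algebra_simps)
  also have "M v + \<iota> (z powi (b + 2 * a * (x + v k))) * M v * X = M v * Q (x + v k)"
    by (simp add: Q_def distrib_left \<iota>_powi_central mult.assoc)
  finally show ?thesis .
qed

lemma Q_X: "Q x * X = X * Q x"
  by (simp add: Q_def distrib_left distrib_right mult.assoc \<iota>_powi_central)

lemma Q_nz: "Q x \<noteq> 0"
proof (cases "h = 0")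
  case True
  have "int l dvd \<Lambda> (ebasis k) 0" "int l dvd \<Lambda> 0 (ebasis k)"
    using Lam_zero1 Lam_zero2 by (auto simp: cong_0_iff)
  then have "int l dvd (b + 2 * a * x)" using True by (simp add: a_def b_def)
  then have "[b + 2 * a * x = 0] (mod int l)" by (simp add: cong_0_iff)
  then have w: "z powi (b + 2 * a * x) = 1" using powi_cong by fastforce
  have i2: "\<iota> 2 = 2" using \<iota>_add[OF Zring_1 Zring_1] \<iota>1 by simp
  have "Q x = \<iota> 2" using True by (simp add: Q_def w X_def M0 i2 \<iota>1)
  moreover have "(2 :: complex) \<in> Zring z" using Zring_of_int[of 2 z] by simp
  ultimately show ?thesis using \<iota>_nz by force
next
  case False
  define c where "c = (\<lambda>f::'n\<Rightarrow>int. if f = 0 then 1 else z powi (b + 2 * a * x))"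
  show ?thesis
  proof
    assume "Q x = 0"
    moreover have "(\<Sum>f\<in>{0, h}. \<iota> (c f) * M f) = Q x"
      using False by (simp add: c_def Q_def X_def M0 \<iota>1)
    ultimately have "(\<Sum>f\<in>{0, h}. \<iota> (c f) * M f) = 0" by simp
    from indep[OF _ _ this, of 0] show False
      using False by (auto simp: c_def Zring_1 Zring_powi)
  qed
qed


definition "PP lo n = prod_list (map (\<lambda>i. Q (lo + int i)) [0..<n])"

lemma PP_0[simp]: "PP lo 0 = 1" by (simp add: PP_def)
lemma PP_Suc: "PP lo (Suc n) = PP lo n * Q (lo + int n)" by (simp add: PP_def)
lemma PP_Suc_left: "PP lo (Suc n) = Q lo * PP (lo + 1) n"
  by (induction n) (simp_all add: PP_Suc mult.assoc algebra_simps)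
lemma PP_nz: "PP lo n \<noteq> 0"
  by (induction n) (simp_all add: PP_Suc Q_nz)

definition "R n = (if 0 \<le> n then PP 0 (nat n) else inverse (PP n (nat (- n))))"

lemma R_0[simp]: "R 0 = 1" by (simp add: R_def)
lemma R_nz: "R n \<noteq> 0" by (simp add: R_def PP_nz)

lemma R_step: "R (n + 1) = R n * Q n"
proof (cases "0 \<le> n")
  case True
  then have "nat (n + 1) = Suc (nat n)" by simp
  then show ?thesis using True by (simp add: R_def PP_Suc)
next
  case False
  define m where "m = nat (- (n + 1))"
  have nm: "nat (- n) = Suc m" using False by (simp add: m_def)
  have "R n = inverse (Q n * PP (n + 1) m)" using False by (simp add: R_def nm PP_Suc_left)
  also have "\<dots> = inverse (PP (n + 1) m) * inverse (Q n)"
    by (simp add: nonzero_inverse_mult_distrib Q_nz PP_nz)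
  finally have "R n * Q n = inverse (PP (n + 1) m)" by (simp add: mult.assoc Q_nz)
  moreover have "R (n + 1) = inverse (PP (n + 1) m)"
  proof (cases "n + 1 = 0")
    case True then show ?thesis by (simp add: m_def)
  next
    case False2: False
    then have "\<not> 0 \<le> n + 1" using False by simp
    then show ?thesis by (simp add: R_def m_def)
  qed
  ultimately show ?thesis by simp
qed

lemma R_step_down: "R (n - 1) = R n * inverse (Q (n - 1))"
  using R_step[of "n - 1"] by (simp add: mult.assoc Q_nz)

lemma comm_Q: "y * X = X * y \<Longrightarrow> y * Q x = Q x * y"
  by (simp add: Q_def distrib_left distrib_right mult.assoc \<iota>_powi_central)
     (simp add: mult.assoc[symmetric] \<iota>_powi_central)

lemma cancel_l: "(x::'a) \<noteq> 0 \<Longrightarrow> inverse x * (x * y) = y" by (simp add: mult.assoc[symmetric])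
lemma cancel_r: "(x::'a) \<noteq> 0 \<Longrightarrow> (y * x) * inverse x = y" by (simp add: mult.assoc)
lemma cancel_l': "(x::'a) \<noteq> 0 \<Longrightarrow> x * (inverse x * y) = y" by (simp add: mult.assoc[symmetric])
lemma cancel_r': "(x::'a) \<noteq> 0 \<Longrightarrow> (y * inverse x) * x = y" by (simp add: mult.assoc)

lemma comm_inverse: "y * w = w * (y::'a) \<Longrightarrow> y * inverse w = inverse w * y"
proof (cases "w = 0")
  case False
  assume e: "y * w = w * y"
  have "inverse w * y = inverse w * (y * w) * inverse w" using False by (simp add: mult.assoc)
  also have "\<dots> = inverse w * (w * y) * inverse w" by (simp add: e)
  also have "\<dots> = y * inverse w" using False by (simp add: cancel_l)
  finally show ?thesis by simp
qed simp

lemma comm_PP: "y * X = X * y \<Longrightarrow> y * PP lo n = PP lo n * y"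
proof (induction n)
  case (Suc n)
  have "y * PP lo (Suc n) = (y * PP lo n) * Q (lo + int n)" by (simp add: PP_Suc mult.assoc)
  also have "\<dots> = PP lo n * (y * Q (lo + int n))" using Suc by (simp add: mult.assoc)
  also have "\<dots> = PP lo (Suc n) * y" using comm_Q[OF Suc.prems] by (simp add: PP_Suc mult.assoc)
  finally show ?case .
qed simp

lemma comm_R: "y * X = X * y \<Longrightarrow> y * R n = R n * y"
  by (simp add: R_def comm_PP comm_inverse)

lemma R_X: "R n * X = X * R n" using comm_R[of X n] by simp
lemma R_comm: "R m * R n = R n * R m" using comm_R[OF R_X[of m], of n] by simp

lemma Qinv_shift: "inverse (Q x) * M v = M v * inverse (Q (x + v k))"
proof -
  have "inverse (Q x) * M v = inverse (Q x) * (M v * Q (x + v k)) * inverse (Q (x + v k))"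
    by (simp add: mult.assoc Q_nz)
  also have "\<dots> = inverse (Q x) * (Q x * M v) * inverse (Q (x + v k))"
    by (simp add: Q_shift)
  also have "\<dots> = M v * inverse (Q (x + v k))" by (simp add: cancel_l Q_nz)
  finally show ?thesis .
qed

lemma R_shift: "R n * M v = M v * inverse (R (v k)) * R (n + v k)"
proof (induction n rule: int_induct[where k = 0])
  case base then show ?case by (simp add: R_nz mult.assoc)
next
  case (step1 i)
  have "R (i + 1) * M v = R i * (Q i * M v)" by (simp add: R_step mult.assoc)
  also have "\<dots> = (R i * M v) * Q (i + v k)" by (simp add: Q_shift mult.assoc)
  also have "\<dots> = M v * inverse (R (v k)) * (R (i + v k) * Q (i + v k))" using step1 by (simp add: mult.assoc)
  also have "\<dots> = M v * inverse (R (v k)) * R (i + 1 + v k)"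
    using R_step[of "i + v k"] by (simp add: algebra_simps)
  finally show ?case .
next
  case (step2 i)
  have "R (i - 1) * M v = R i * (inverse (Q (i - 1)) * M v)" by (simp add: R_step_down mult.assoc)
  also have "\<dots> = (R i * M v) * inverse (Q (i - 1 + v k))" by (simp add: Qinv_shift mult.assoc)
  also have "\<dots> = M v * inverse (R (v k)) * (R (i + v k) * inverse (Q (i + v k - 1)))"
    using step2 by (simp add: mult.assoc algebra_simps)
  also have "\<dots> = M v * inverse (R (v k)) * R (i - 1 + v k)"
    using R_step_down[of "i + v k"] by (simp add: algebra_simps)
  finally show ?case .
qed

definition "Y f = M f * R (f k)"

lemma Y_mult: "Y f1 * Y f2 = \<iota> (z powi \<Lambda> f1 f2) * Y (f1 + f2)"
proof -
  have "Y f1 * Y f2 = M f1 * (R (f1 k) * M f2) * R (f2 k)" by (simp add: Y_def mult.assoc)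
  also have "\<dots> = M f1 * M f2 * (inverse (R (f2 k)) * (R (f1 k + f2 k) * R (f2 k)))"
    by (simp add: R_shift mult.assoc)
  also have "R (f1 k + f2 k) * R (f2 k) = R (f2 k) * R (f1 k + f2 k)" by (rule R_comm)
  also have "inverse (R (f2 k)) * (R (f2 k) * R (f1 k + f2 k)) = R (f1 k + f2 k)"
    by (simp add: mult.assoc[symmetric] R_nz)
  finally show ?thesis by (simp add: Y_def Mmult mult.assoc)
qed

lemma Y_0: "Y 0 = 1" by (simp add: Y_def M0)
lemma Y_k0: "v k = 0 \<Longrightarrow> Y v = M v" by (simp add: Y_def)

lemma R_1: "R 1 = Q 0" using R_step[of 0] by simp

lemma Y_ek: "Y (ebasis k) = M (ebasis k) + M (ebasis k + h)"
proof -
  have "Y (ebasis k) = M (ebasis k) * Q 0" by (simp add: Y_def ebasis_def R_1)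
  also have "\<dots> = M (ebasis k) + M (ebasis k) * (\<iota> (z powi b) * M h)"
    by (simp add: Q_def X_def distrib_left)
  also have "M (ebasis k) * (\<iota> (z powi b) * M h) = \<iota> (z powi b) * (M (ebasis k) * M h)"
    by (simp only: mult.assoc[symmetric] \<iota>_powi_central[of b "M (ebasis k)"])
  also have "\<iota> (z powi b) * (M (ebasis k) * M h) = M (ebasis k + h)"
    by (simp add: Mmult b_def mult.assoc[symmetric] \<iota>_powi_inv)
  finally show ?thesis .
qed

lemma Y_ej: "j \<noteq> k \<Longrightarrow> Y (ebasis j) = M (ebasis j)"
  by (simp add: Y_k0 ebasis_def)

lemma M_R_swap: "v k = int m \<Longrightarrow> M v * R (int m) = PP (- int m) m * M v"
proof -
  assume vk: "v k = int m"
  have "R (- int m) * M v = M v * inverse (R (int m))" using R_shift[of "- int m" v] vk by simp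
  then have "R (- int m) * M v * R (int m) = M v" by (simp add: mult.assoc R_nz)
  then have "inverse (R (- int m)) * (R (- int m) * M v * R (int m)) = inverse (R (- int m)) * M v"
    by simp
  then have "M v * R (int m) = inverse (R (- int m)) * M v"
    by (simp add: mult.assoc cancel_l R_nz)
  moreover have "inverse (R (- int m)) = PP (- int m) m"
  proof (cases m)
    case (Suc n)
    have "nat (int n + 1) = Suc n" by arith
    then show ?thesis using Suc by (simp add: R_def)
  qed (simp add: R_def)
  ultimately show ?thesis by simp
qed

end


context frame
begin

definition vl :: "(('n \<Rightarrow> int) \<Rightarrow> 'a) \<Rightarrow> (complex \<times> ('n \<Rightarrow> int)) list \<Rightarrow> 'a" where
  "vl W xs = sum_list (map (\<lambda>p. \<iota> (fst p) * W (snd p)) xs)"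
definition valid :: "(complex \<times> ('n \<Rightarrow> int)) list \<Rightarrow> bool" where
  "valid xs = (\<forall>p\<in>set xs. fst p \<in> Zring z)"
definition coef :: "(complex \<times> ('n \<Rightarrow> int)) list \<Rightarrow> ('n \<Rightarrow> int) \<Rightarrow> complex" where
  "coef xs f = sum_list (map fst (filter (\<lambda>p. snd p = f) xs))"
definition lmul :: "(complex \<times> ('n \<Rightarrow> int)) list \<Rightarrow> (complex \<times> ('n \<Rightarrow> int)) list \<Rightarrow> (complex \<times> ('n \<Rightarrow> int)) list" where
  "lmul xs ys = concat (map (\<lambda>p. map (\<lambda>q. (fst p * fst q * z powi \<Lambda> (snd p) (snd q), snd p + snd q)) ys) xs)"
definition mf :: "(('n \<Rightarrow> int) \<Rightarrow> 'a) \<Rightarrow> bool" where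
  "mf W = (\<forall>f g. W f * W g = \<iota> (z powi \<Lambda> f g) * W (f + g))"
definition negl :: "(complex \<times> ('n \<Rightarrow> int)) list \<Rightarrow> (complex \<times> ('n \<Rightarrow> int)) list" where
  "negl xs = map (\<lambda>p. (- fst p, snd p)) xs"

lemma vl_Nil[simp]: "vl W [] = 0" by (simp add: vl_def)
lemma vl_Cons[simp]: "vl W (p # xs) = \<iota> (fst p) * W (snd p) + vl W xs" by (simp add: vl_def)
lemma vl_append[simp]: "vl W (xs @ ys) = vl W xs + vl W ys" by (simp add: vl_def)
lemma valid_Nil[simp]: "valid []" by (simp add: valid_def)
lemma valid_Cons[simp]: "valid (p # xs) \<longleftrightarrow> fst p \<in> Zring z \<and> valid xs" by (simp add: valid_def)
lemma valid_append[simp]: "valid (xs @ ys) \<longleftrightarrow> valid xs \<and> valid ys" by (auto simp add: valid_def)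
lemma coef_Nil[simp]: "coef [] f = 0" by (simp add: coef_def)
lemma coef_Cons[simp]: "coef (p # xs) f = (if snd p = f then fst p else 0) + coef xs f" by (simp add: coef_def)
lemma coef_append[simp]: "coef (xs @ ys) f = coef xs f + coef ys f" by (simp add: coef_def)
lemma coef_Zring: "valid xs \<Longrightarrow> coef xs f \<in> Zring z"
  by (induction xs) (auto intro!: Zring_add simp: Zring_0)
lemma coef_notin: "f \<notin> snd ` set xs \<Longrightarrow> coef xs f = 0"
  by (induction xs) auto

lemma vl_single: "vl W [(c, f)] = \<iota> c * W f" by simp

lemma vl_cong: "(\<And>p. p \<in> set xs \<Longrightarrow> W (snd p) = W' (snd p)) \<Longrightarrow> vl W xs = vl W' xs"
  by (induction xs) auto

lemma collapse:
  assumes "valid xs" "finite S" "snd ` set xs \<subseteq> S"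
  shows "vl W xs = (\<Sum>f\<in>S. \<iota> (coef xs f) * W f)"
  using assms
proof (induction xs)
  case Nil then show ?case by (simp add: \<iota>0)
next
  case (Cons p xs)
  have pS: "snd p \<in> S" using Cons.prems by auto
  have "(\<Sum>f\<in>S. \<iota> (coef (p # xs) f) * W f)
      = (\<Sum>f\<in>S. (if f = snd p then \<iota> (fst p) * W f else 0) + \<iota> (coef xs f) * W f)"
  proof (rule sum.cong)
    fix f assume "f \<in> S"
    have z1: "(if snd p = f then fst p else 0) \<in> Zring z" using Cons.prems by (auto simp: Zring_0)
    have vx: "valid xs" using Cons.prems by simp
    have "\<iota> (coef (p # xs) f) = \<iota> (if snd p = f then fst p else 0) + \<iota> (coef xs f)"
      using \<iota>_add[OF z1 coef_Zring[OF vx]] by simp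
    then show "\<iota> (coef (p # xs) f) * W f = (if f = snd p then \<iota> (fst p) * W f else 0) + \<iota> (coef xs f) * W f"
      by (auto simp: distrib_right \<iota>0)
  qed simp
  also have "\<dots> = \<iota> (fst p) * W (snd p) + (\<Sum>f\<in>S. \<iota> (coef xs f) * W f)"
    using pS Cons.prems by (simp add: sum.distrib)
  also have "\<dots> = vl W (p # xs)" using Cons by simp
  finally show ?case by simp
qed

lemma vl_zero_coef:
  assumes "valid xs" "vl M xs = 0" shows "coef xs f = 0"
proof -
  let ?S = "insert f (snd ` set xs)"
  have "(\<Sum>f\<in>?S. \<iota> (coef xs f) * M f) = 0" using collapse[of xs ?S M] assms by auto
  from indep[OF _ _ this] show ?thesis using assms coef_Zring by auto
qed

lemma coef_zero_vl:
  assumes "valid xs" "\<And>f. coef xs f = 0" shows "vl W xs = 0"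
  using collapse[OF assms(1), of "snd ` set xs" W] assms(2) by (simp add: \<iota>0)

lemma Zring_uminus_iff: "- c \<in> Zring z \<longleftrightarrow> c \<in> Zring z"
  using Zring_uminus[of "- c" z] Zring_uminus[of c z] by auto
lemma valid_negl[simp]: "valid (negl xs) \<longleftrightarrow> valid xs"
  by (simp add: negl_def valid_def Zring_uminus_iff)
lemma coef_negl[simp]: "coef (negl xs) f = - coef xs f"
  by (induction xs) (auto simp: negl_def)
lemma vl_negl: "valid xs \<Longrightarrow> vl W (negl xs) = - vl W xs"
  by (induction xs) (auto simp: negl_def \<iota>_uminus)

lemma transfer:
  assumes "valid xs" "valid ys" "vl M xs = vl M ys" shows "vl W xs = vl W ys"
proof -
  have "vl M (xs @ negl ys) = 0" using assms by (simp add: vl_negl)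
  then have c: "coef xs f = coef ys f" for f
    using vl_zero_coef[of "xs @ negl ys" f] assms by simp
  let ?S = "snd ` set xs \<union> snd ` set ys"
  have "vl W xs = (\<Sum>f\<in>?S. \<iota> (coef xs f) * W f)" using collapse[of xs ?S W] assms by auto
  also have "\<dots> = (\<Sum>f\<in>?S. \<iota> (coef ys f) * W f)" by (simp add: c)
  also have "\<dots> = vl W ys" using collapse[of ys ?S W] assms by auto
  finally show ?thesis .
qed

lemma lmul_Nil[simp]: "lmul [] ys = []" by (simp add: lmul_def)
lemma lmul_Cons: "lmul (p # xs) ys = map (\<lambda>q. (fst p * fst q * z powi \<Lambda> (snd p) (snd q), snd p + snd q)) ys @ lmul xs ys"
  by (simp add: lmul_def)

lemma valid_lmul: "valid xs \<Longrightarrow> valid ys \<Longrightarrow> valid (lmul xs ys)"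
  by (auto simp: lmul_def valid_def intro!: Zring_mult Zring_powi)

lemma vl_lmul_single:
  assumes "mf W" "valid ys" "fst p \<in> Zring z"
  shows "vl W (map (\<lambda>q. (fst p * fst q * z powi \<Lambda> (snd p) (snd q), snd p + snd q)) ys) = \<iota> (fst p) * W (snd p) * vl W ys"
  using assms(2)
proof (induction ys)
  case Nil then show ?case by simp
next
  case (Cons q ys)
  have "\<iota> (fst p * fst q * z powi \<Lambda> (snd p) (snd q)) = \<iota> (fst p) * \<iota> (fst q) * \<iota> (z powi \<Lambda> (snd p) (snd q))"
    using Cons.prems assms(3) by (simp add: \<iota>_mult Zring_mult Zring_powi)
  then have "\<iota> (fst p * fst q * z powi \<Lambda> (snd p) (snd q)) * W (snd p + snd q)
      = \<iota> (fst p) * \<iota> (fst q) * (W (snd p) * W (snd q))"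
    using assms(1) unfolding mf_def by (simp add: mult.assoc)
  also have "\<dots> = \<iota> (fst p) * ((\<iota> (fst q) * W (snd p)) * W (snd q))"
    by (simp only: mult.assoc)
  also have "\<dots> = \<iota> (fst p) * ((W (snd p) * \<iota> (fst q)) * W (snd q))"
    using Cons.prems \<iota>_central[of "fst q" "W (snd p)"] by simp
  also have "\<dots> = \<iota> (fst p) * W (snd p) * (\<iota> (fst q) * W (snd q))"
    by (simp only: mult.assoc)
  finally have t: "\<iota> (fst p * fst q * z powi \<Lambda> (snd p) (snd q)) * W (snd p + snd q) = \<iota> (fst p) * W (snd p) * (\<iota> (fst q) * W (snd q))" .
  have vy: "valid ys" using Cons.prems by simp
  show ?case by (simp only: list.map vl_Cons prod.sel t Cons.IH[OF vy] distrib_left)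
qed

lemma vl_lmul:
  assumes "mf W" "valid xs" "valid ys"
  shows "vl W (lmul xs ys) = vl W xs * vl W ys"
  using assms(2)
proof (induction xs)
  case (Cons p xs)
  then show ?case using vl_lmul_single[OF assms(1) assms(3), of p]
    by (simp add: lmul_Cons distrib_right)
qed simp

lemma mf_M: "mf M" by (simp add: mf_def Mmult)

end

context frame2
begin
lemma mf_Y: "mf Y" unfolding mf_def
  by (intro allI) (rule Y_mult)
end


context frame
begin

definition T :: "'a set" where "T = {x. \<exists>xs. valid xs \<and> vl M xs = x}"

lemma T_vl: "valid xs \<Longrightarrow> vl M xs \<in> T" by (auto simp: T_def)
lemma T_mult: "x \<in> T \<Longrightarrow> y \<in> T \<Longrightarrow> x * y \<in> T"
proof -
  assume "x \<in> T" "y \<in> T"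
  then obtain xs ys where "valid xs" "vl M xs = x" "valid ys" "vl M ys = y" unfolding T_def by blast
  then show ?thesis using T_vl[of "lmul xs ys"] vl_lmul[OF mf_M, of xs ys] valid_lmul[of xs ys] by simp
qed
lemma T_add: "x \<in> T \<Longrightarrow> y \<in> T \<Longrightarrow> x + y \<in> T"
proof -
  assume "x \<in> T" "y \<in> T"
  then obtain xs ys where "valid xs" "vl M xs = x" "valid ys" "vl M ys = y" unfolding T_def by blast
  then show ?thesis using T_vl[of "xs @ ys"] by simp
qed
lemma T_uminus: "x \<in> T \<Longrightarrow> - x \<in> T"
proof -
  assume "x \<in> T"
  then obtain xs where "valid xs" "vl M xs = x" unfolding T_def by blast
  then show ?thesis using T_vl[of "negl xs"] vl_negl[of xs M] by simp
qed
lemma T_0: "0 \<in> T" using T_vl[of "[]"] by simp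
lemma T_iota: "c \<in> Zring z \<Longrightarrow> \<iota> c \<in> T" using T_vl[of "[(c, 0)]"] by (simp add: M0)
lemma T_1: "1 \<in> T" using T_iota[OF Zring_1] by (simp add: \<iota>1)
lemma T_M: "M f \<in> T" using T_vl[of "[(1, f)]"] by (simp add: \<iota>1 Zring_1)

lemma torus_image_T: "torus_image z \<iota> M \<subseteq> T"
proof
  fix x assume "x \<in> torus_image z \<iota> M"
  then obtain S c where x: "x = (\<Sum>f\<in>S. \<iota> (c f) * M f)" and S: "finite S" "\<forall>f\<in>S. c f \<in> Zring z"
    unfolding torus_image_def by blast
  obtain fs where fs: "set fs = S" "distinct fs" using finite_distinct_list[OF S(1)] by blast
  let ?xs = "map (\<lambda>f. (c f, f)) fs"
  have "vl M ?xs = sum_list (map (\<lambda>f. \<iota> (c f) * M f) fs)" by (simp add: vl_def o_def)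
  also have "\<dots> = x" using fs x by (simp add: sum_list_distinct_conv_sum_set)
  finally show "x \<in> T" using T_vl[of ?xs] S fs by (auto simp: valid_def)
qed

end

context frame2
begin

definition \<phi> :: "'a \<Rightarrow> 'a" where "\<phi> x = vl Y (SOME xs. valid xs \<and> vl M xs = x)"

lemma \<phi>_vl: assumes "valid xs" shows "\<phi> (vl M xs) = vl Y xs"
proof -
  let ?ys = "SOME ys. valid ys \<and> vl M ys = vl M xs"
  have "valid ?ys \<and> vl M ?ys = vl M xs" by (rule someI[of _ xs]) (simp add: assms)
  then show ?thesis unfolding \<phi>_def using transfer[of ?ys xs Y] assms by simp
qed

lemma \<phi>_mult: "x \<in> T \<Longrightarrow> y \<in> T \<Longrightarrow> \<phi> (x * y) = \<phi> x * \<phi> y"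
proof -
  assume "x \<in> T" "y \<in> T"
  then obtain xs ys where v: "valid xs" "vl M xs = x" "valid ys" "vl M ys = y" unfolding T_def by blast
  have "\<phi> (x * y) = \<phi> (vl M (lmul xs ys))" using vl_lmul[OF mf_M v(1,3)] v by simp
  also have "\<dots> = vl Y (lmul xs ys)" using \<phi>_vl valid_lmul v by blast
  also have "\<dots> = vl Y xs * vl Y ys" using vl_lmul[OF mf_Y v(1,3)] .
  finally show ?thesis using \<phi>_vl v by metis
qed
lemma \<phi>_add: "x \<in> T \<Longrightarrow> y \<in> T \<Longrightarrow> \<phi> (x + y) = \<phi> x + \<phi> y"
proof -
  assume "x \<in> T" "y \<in> T"
  then obtain xs ys where v: "valid xs" "vl M xs = x" "valid ys" "vl M ys = y" unfolding T_def by blast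
  have "\<phi> (x + y) = \<phi> (vl M (xs @ ys))" using v by simp
  also have "\<dots> = vl Y (xs @ ys)" by (rule \<phi>_vl) (simp add: v)
  moreover have "\<phi> x = vl Y xs" "\<phi> y = vl Y ys" using \<phi>_vl v by metis+
  ultimately show ?thesis by simp
qed
lemma \<phi>_iota: "c \<in> Zring z \<Longrightarrow> \<phi> (\<iota> c) = \<iota> c"
  using \<phi>_vl[of "[(c, 0)]"] by (simp add: M0 Y_0)
lemma \<phi>_1: "\<phi> 1 = 1" using \<phi>_iota[OF Zring_1] by (simp add: \<iota>1)
lemma \<phi>_M: "\<phi> (M f) = Y f" using \<phi>_vl[of "[(1, f)]"] by (simp add: \<iota>1 Zring_1)

end


context frame
begin

lemma lmul_single: "lmul xs [q] = map (\<lambda>p. (fst p * fst q * z powi \<Lambda> (snd p) (snd q), snd p + snd q)) xs"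
  by (induction xs) (simp_all add: lmul_Cons plus_fun_def)

lemma coef_lmul_single: "coef (lmul xs [(1, E)]) f = coef xs (f - E) * z powi \<Lambda> (f - E) E"
proof (induction xs)
  case (Cons p xs)
  have e: "(snd p + E = f) = (snd p = f - E)" by (auto simp: algebra_simps)
  show ?case using Cons by (auto simp: lmul_Cons e distrib_right)
qed simp

lemma vl_concat: "vl W (concat xss) = sum_list (map (vl W) xss)"
  by (induction xss) simp_all
lemma coef_concat: "coef (concat xss) f = sum_list (map (\<lambda>xs. coef xs f) xss)"
  by (induction xss) simp_all
lemma valid_concat: "(\<And>xs. xs \<in> set xss \<Longrightarrow> valid xs) \<Longrightarrow> valid (concat xss)"
  by (induction xss) simp_all

lemma coef_distinct: "distinct (map snd xs) \<Longrightarrow> p \<in> set xs \<Longrightarrow> coef xs (snd p) = fst p"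
proof (induction xs)
  case (Cons q xs)
  show ?case
  proof (cases "p = q")
    case True
    then have "snd p \<notin> snd ` set xs" using Cons.prems by auto
    then show ?thesis using True by (simp add: coef_notin)
  next
    case False
    then have "p \<in> set xs" using Cons.prems by auto
    moreover then have "snd q \<noteq> snd p" using Cons.prems by auto
    ultimately show ?thesis using Cons by simp
  qed
qed simp

end

context frame2
begin

definition ek :: "int \<Rightarrow> 'n \<Rightarrow> int" where "ek m = (\<lambda>i. if i = k then m else 0)"

lemma ek_k[simp]: "ek m k = m" by (simp add: ek_def)
lemma plus_ek_k[simp]: "(f + ek m) k = f k + m" by (simp add: ek_def)
lemma minus_ek_k[simp]: "(f - ek m) k = f k - m" by (simp add: ek_def)

lemma indep_k:
  assumes vB: "\<And>m. m < Suc d \<Longrightarrow> valid (B m)"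
    and kB: "\<And>m p. m < Suc d \<Longrightarrow> p \<in> set (B m) \<Longrightarrow> snd p k = 0"
    and sum0: "(\<Sum>m\<in>{0..<Suc d}. vl M (B m) * M (ek (int m))) = 0"
  shows "vl M (B d) = 0"
proof -
  define L where "L = concat (map (\<lambda>m. lmul (B m) [(1, ek (int m))]) [0..<Suc d])"
  have vL: "valid L" unfolding L_def
    by (rule valid_concat) (auto intro!: valid_lmul vB simp: Zring_1)
  have "vl M L = (\<Sum>m\<in>{0..<Suc d}. vl M (lmul (B m) [(1, ek (int m))]))"
    by (simp add: L_def vl_concat o_def interv_sum_list_conv_sum_set_nat)
  also have "\<dots> = (\<Sum>m\<in>{0..<Suc d}. vl M (B m) * M (ek (int m)))"
    by (rule sum.cong) (simp_all add: vl_lmul[OF mf_M] vB Zring_1 \<iota>1)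
  finally have vL0: "vl M L = 0" using sum0 by simp
  have "coef (B d) g = 0" for g
  proof (cases "g k = 0")
    case True
    define f where "f = g + ek (int d)"
    have "coef L f = (\<Sum>m\<in>{0..<Suc d}. coef (lmul (B m) [(1, ek (int m))]) f)"
      by (simp add: L_def coef_concat o_def interv_sum_list_conv_sum_set_nat)
    also have "\<dots> = (\<Sum>m\<in>{0..<Suc d}. if m = d then coef (B d) g * z powi \<Lambda> g (ek (int d)) else 0)"
    proof (rule sum.cong)
      fix m assume m: "m \<in> {0..<Suc d}"
      show "coef (lmul (B m) [(1, ek (int m))]) f = (if m = d then coef (B d) g * z powi \<Lambda> g (ek (int d)) else 0)"
      proof (cases "m = d")
        case True then show ?thesis by (simp add: coef_lmul_single f_def)
      next
        case False
        have "(f - ek (int m)) k \<noteq> 0" using False True m by (simp add: f_def)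
        then have "f - ek (int m) \<notin> snd ` set (B m)" using kB m by fastforce
        then show ?thesis using False by (simp add: coef_lmul_single coef_notin)
      qed
    qed simp
    also have "\<dots> = coef (B d) g * z powi \<Lambda> g (ek (int d))" by simp
    finally have "coef (B d) g * z powi \<Lambda> g (ek (int d)) = 0"
      using vl_zero_coef[OF vL vL0, of f] by simp
    then show ?thesis using z_nz by simp
  next
    case False
    then have "g \<notin> snd ` set (B d)" using kB by fastforce
    then show ?thesis by (rule coef_notin)
  qed
  then show ?thesis using coef_zero_vl[OF vB[of d]] by simp
qed

end



context frame
begin

lemma set_lmul_snd: "p \<in> set (lmul xs ys) \<Longrightarrow> \<exists>q r. q \<in> set xs \<and> r \<in> set ys \<and> snd p = snd q + snd r"
  by (auto simp: lmul_def) blast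

lemma vl_partition:
  assumes "\<And>p. p \<in> set ys \<Longrightarrow> \<kappa> p \<in> A" "finite A"
  shows "vl W ys = (\<Sum>m\<in>A. vl W (filter (\<lambda>p. \<kappa> p = m) ys))"
  using assms(1)
proof (induction ys)
  case Nil then show ?case by simp
next
  case (Cons p ys)
  have "(\<Sum>m\<in>A. vl W (filter (\<lambda>p. \<kappa> p = m) (p # ys)))
      = (\<Sum>m\<in>A. (if \<kappa> p = m then \<iota> (fst p) * W (snd p) else 0) + vl W (filter (\<lambda>p. \<kappa> p = m) ys))"
    by (rule sum.cong) auto
  also have "\<dots> = \<iota> (fst p) * W (snd p) + (\<Sum>m\<in>A. vl W (filter (\<lambda>p. \<kappa> p = m) ys))"
    using Cons.prems assms(2) by (simp add: sum.distrib)
  finally show ?case using Cons by simp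
qed

end

context frame2
begin

definition "Ql x = [(1, 0), (z powi (b + 2 * a * x), h)]"

lemma vl_Ql: "vl M (Ql x) = Q x" by (simp add: Ql_def Q_def X_def \<iota>1 M0)
lemma valid_Ql: "valid (Ql x)" by (simp add: Ql_def Zring_1 Zring_powi)
lemma Ql_k0: "p \<in> set (Ql x) \<Longrightarrow> snd p k = 0" by (auto simp: Ql_def h_k)

primrec LP :: "int \<Rightarrow> nat \<Rightarrow> (complex \<times> ('n \<Rightarrow> int)) list" where
  "LP lo 0 = [(1, 0)]"
| "LP lo (Suc n) = lmul (LP lo n) (Ql (lo + int n))"

lemma valid_LP: "valid (LP lo n)"
  by (induction n) (simp_all add: Zring_1 valid_lmul valid_Ql)
lemma vl_LP: "vl M (LP lo n) = PP lo n"
  by (induction n) (simp_all add: \<iota>1 M0 vl_lmul[OF mf_M] valid_LP valid_Ql vl_Ql PP_Suc)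
lemma LP_k0: "p \<in> set (LP lo n) \<Longrightarrow> snd p k = 0"
proof (induction n arbitrary: p)
  case (Suc n)
  then obtain q r where "q \<in> set (LP lo n)" "r \<in> set (Ql (lo + int n))" "snd p = snd q + snd r"
    using set_lmul_snd by fastforce
  then show ?case using Suc.IH Ql_k0 by simp
qed simp


lemma inj_core:
  assumes vy: "valid ys" and dy: "distinct (map snd ys)" and nzy: "\<And>p. p \<in> set ys \<Longrightarrow> fst p \<noteq> 0"
    and ky: "\<And>p. p \<in> set ys \<Longrightarrow> snd p k \<ge> 0" and ne: "ys \<noteq> []"
  shows "vl Y ys \<noteq> 0"
proof
  assume Y0: "vl Y ys = 0"
  define \<kappa> where "\<kappa> p = nat (snd p k)" for p :: "complex \<times> ('n \<Rightarrow> int)"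
  define d where "d = Max (\<kappa> ` set ys)"
  have fin: "finite (\<kappa> ` set ys)" by simp
  have kd: "\<kappa> p \<le> d" if "p \<in> set ys" for p using that fin by (simp add: d_def)
  have "\<kappa> ` set ys \<noteq> {}" using ne by simp
  then have "d \<in> \<kappa> ` set ys" using Max_in[OF fin] by (simp add: d_def)
  then obtain p0 where p0: "p0 \<in> set ys" "\<kappa> p0 = d" by force
  define F where "F m = filter (\<lambda>p. \<kappa> p = m) ys" for m
  define Am where "Am m = map (\<lambda>p. (fst p * z powi (- \<Lambda> (snd p - ek (int m)) (ek (int m))), snd p - ek (int m))) (F m)" for m
  define Bm where "Bm m = lmul (Am m) (LP (- int m) m)" for m
  have vF: "valid (F m)" for m using vy by (auto simp: F_def valid_def)
  have vA: "valid (Am m)" for m using vF[of m] by (auto simp: Am_def valid_def intro!: Zring_mult Zring_powi)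
  have vB: "valid (Bm m)" for m by (simp add: Bm_def valid_lmul vA valid_LP)
  have FA: "lmul (Am m) [(1, ek (int m))] = F m" for m
  proof -
    have "lmul (Am m) [(1, ek (int m))] = map (\<lambda>p. (fst p * z powi (- \<Lambda> (snd p - ek (int m)) (ek (int m))) * 1 *
        z powi \<Lambda> (snd p - ek (int m)) (ek (int m)), snd p - ek (int m) + ek (int m))) (F m)"
      by (simp add: lmul_single Am_def o_def)
    also have "\<dots> = F m"
    proof (rule map_idI)
      fix p
      show "(fst p * z powi (- \<Lambda> (snd p - ek (int m)) (ek (int m))) * 1 *
        z powi \<Lambda> (snd p - ek (int m)) (ek (int m)), snd p - ek (int m) + ek (int m)) = p"
        by (simp add: mult.assoc powi_minus_mult)
    qed
    finally show ?thesis .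
  qed
  have vlF: "vl W (F m) = vl W (Am m) * W (ek (int m))" if "mf W" for W m
    using vl_lmul[OF that vA[of m], of "[(1, ek (int m))]"] FA[of m] by (simp add: Zring_1 \<iota>1)
  have kA: "snd p k = 0" if pA: "p \<in> set (Am m)" for p m
  proof -
    obtain q where q: "p = (fst q * z powi (- \<Lambda> (snd q - ek (int m)) (ek (int m))), snd q - ek (int m))" "q \<in> set (F m)"
      using pA unfolding Am_def set_map by (rule imageE)
    then have "q \<in> set ys" "\<kappa> q = m" by (auto simp: F_def)
    then have "snd q k = int m" using ky[of q] by (auto simp: \<kappa>_def)
    then show ?thesis using q by simp
  qed
  have kB: "snd p k = 0" if pB: "p \<in> set (Bm m)" for p m
  proof -
    obtain q r where "q \<in> set (Am m)" "r \<in> set (LP (- int m) m)" "snd p = snd q + snd r"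
      using set_lmul_snd pB unfolding Bm_def by blast
    then show ?thesis using kA LP_k0 by simp
  qed
  have "vl Y ys = (\<Sum>m\<in>{0..<Suc d}. vl Y (F m))"
    unfolding F_def by (rule vl_partition) (auto dest: kd)
  also have "\<dots> = (\<Sum>m\<in>{0..<Suc d}. vl M (Bm m) * M (ek (int m)))"
  proof (rule sum.cong)
    fix m
    have "vl Y (F m) = vl Y (Am m) * Y (ek (int m))" by (rule vlF[OF mf_Y])
    also have "vl Y (Am m) = vl M (Am m)" by (rule vl_cong) (simp add: Y_k0 kA)
    also have "Y (ek (int m)) = M (ek (int m)) * R (int m)" by (simp add: Y_def)
    also have "\<dots> = PP (- int m) m * M (ek (int m))" by (rule M_R_swap) simp
    also have "vl M (Am m) * (PP (- int m) m * M (ek (int m))) = vl M (Bm m) * M (ek (int m))"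
      by (simp add: Bm_def vl_lmul[OF mf_M] vA valid_LP vl_LP mult.assoc)
    finally show "vl Y (F m) = vl M (Bm m) * M (ek (int m))" .
  qed simp
  finally have "(\<Sum>m\<in>{0..<Suc d}. vl M (Bm m) * M (ek (int m))) = 0" using Y0 by simp
  then have "vl M (Bm d) = 0" by (intro indep_k[where B = Bm]) (auto simp: vB kB)
  then have "vl M (Am d) * PP (- int d) d = 0"
    by (simp add: Bm_def vl_lmul[OF mf_M] vA valid_LP vl_LP)
  then have "vl M (Am d) = 0" using PP_nz by simp
  then have "vl M (F d) = 0" using vlF[OF mf_M, of d] by simp
  then have "coef (F d) (snd p0) = 0" using vl_zero_coef vF by blast
  moreover have "coef (F d) (snd p0) = fst p0"
    by (rule coef_distinct) (use dy p0 in \<open>auto simp: F_def distinct_map_filter\<close>)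
  ultimately show False using nzy p0 by simp
qed



lemma vl_Y_zero:
  assumes vx: "valid xs" and Y0: "vl Y xs = 0"
  shows "vl M xs = 0"
proof (rule ccontr)
  assume Mnz: "vl M xs \<noteq> 0"
  define t where "t = sum_list (map (\<lambda>p. nat \<bar>snd p k\<bar>) xs)"
  have tb: "nat \<bar>snd p k\<bar> \<le> t" if "p \<in> set xs" for p
    unfolding t_def by (rule member_le_sum_list) (use that in auto)
  define xs' where "xs' = lmul xs [(1, ek (int t))]"
  have vx': "valid xs'" by (simp add: xs'_def valid_lmul vx Zring_1)
  have M': "vl M xs' = vl M xs * M (ek (int t))"
    using vl_lmul[OF mf_M vx, of "[(1, ek (int t))]"] by (simp add: xs'_def Zring_1 \<iota>1)
  have Mnz': "vl M xs' \<noteq> 0" using Mnz M_nz by (simp add: M')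
  have Y': "vl Y xs' = 0"
    using vl_lmul[OF mf_Y vx, of "[(1, ek (int t))]"] Y0 by (simp add: xs'_def Zring_1 \<iota>1)
  have k': "snd p k \<ge> 0" if px: "p \<in> set xs'" for p
  proof -
    obtain q where "q \<in> set xs" "snd p = snd q + ek (int t)"
      using px unfolding xs'_def lmul_single by auto
    then show ?thesis using tb[of q] by simp
  qed
  define S where "S = snd ` set xs'"
  define nz where "nz = {f \<in> S. coef xs' f \<noteq> 0}"
  have finS: "finite S" by (simp add: S_def)
  then have "finite nz" by (simp add: nz_def)
  then obtain fs where fs: "set fs = nz" "distinct fs" using finite_distinct_list by blast
  define ys where "ys = map (\<lambda>f. (coef xs' f, f)) fs"
  have vy: "valid ys" by (auto simp: ys_def valid_def coef_Zring[OF vx'])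
  have "vl M ys = (\<Sum>f\<in>nz. \<iota> (coef xs' f) * M f)"
    using fs by (simp add: ys_def vl_def o_def sum_list_distinct_conv_sum_set)
  also have "\<dots> = (\<Sum>f\<in>S. \<iota> (coef xs' f) * M f)"
    by (rule sum.mono_neutral_left) (auto simp: nz_def finS \<iota>0)
  also have "\<dots> = vl M xs'" using collapse[OF vx' finS] by (simp add: S_def)
  finally have MM: "vl M ys = vl M xs'" .
  have "vl Y ys = vl Y xs'" by (rule transfer[OF vy vx' MM])
  then have "vl Y ys = 0" using Y' by simp
  moreover have "vl Y ys \<noteq> 0"
  proof (rule inj_core[OF vy])
    show "distinct (map snd ys)" using fs by (simp add: ys_def o_def)
    show "\<And>p. p \<in> set ys \<Longrightarrow> fst p \<noteq> 0" using fs by (auto simp: ys_def nz_def)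
    show "\<And>p. p \<in> set ys \<Longrightarrow> snd p k \<ge> 0" using fs k' by (auto simp: ys_def nz_def S_def)
    show "ys \<noteq> []" using MM Mnz' by auto
  qed
  ultimately show False by simp
qed

lemma \<phi>_nz: assumes "x \<in> T" "x \<noteq> 0" shows "\<phi> x \<noteq> 0"
proof -
  obtain xs where "valid xs" "vl M xs = x" using assms(1) unfolding T_def by blast
  then show ?thesis using vl_Y_zero \<phi>_vl assms(2) by metis
qed


end



lemma rat_poly_clear:
  "\<exists>n::int. n > 0 \<and> (\<exists>P::int poly. smult (of_int n) (map_poly (of_rat::rat\<Rightarrow>complex) p) = map_poly of_int P)"
proof (induction p)
  case (pCons c p)
  then obtain n P where nP: "n > 0" "smult (of_int n) (map_poly (of_rat::rat\<Rightarrow>complex) p) = map_poly of_int P" by blast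
  obtain u v where uv: "quotient_of c = (u, v)" by (cases "quotient_of c")
  then have v: "v > 0" and c: "c = of_int u / of_int v" using quotient_of_denom_pos quotient_of_div by blast+
  have "smult (of_int (n * v)) (map_poly (of_rat::rat\<Rightarrow>complex) (pCons c p))
      = pCons (of_int (n * v) * of_rat c) (smult (of_int v) (smult (of_int n) (map_poly of_rat p)))"
    by (simp add: map_poly_pCons mult.commute)
  also have "of_int (n * v) * (of_rat c :: complex) = of_int (n * u)"
    using v by (simp add: c of_rat_divide field_simps)
  also have "pCons (of_int (n * u)) (smult (of_int v) (smult (of_int n) (map_poly of_rat p)))
      = map_poly (of_int::int\<Rightarrow>complex) (pCons (n * u) (smult v P))"
    using nP(2) by (simp add: map_poly_pCons map_poly_smult)
  finally show ?case using nP(1) v by (intro exI[of _ "n * v"]) auto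
next
  case 0
  have "smult (of_int 1) (map_poly (of_rat::rat\<Rightarrow>complex) 0) = map_poly of_int (0::int poly)" by simp
  show ?case by (rule exI[of _ 1], rule conjI, simp, rule exI[of _ 0], simp)
qed

lemma poly_clear:
  "\<exists>n::int. n > 0 \<and> (\<exists>P::int poly. of_int n * poly (map_poly (of_rat::rat\<Rightarrow>complex) p) x = poly (map_poly of_int P) x)"
proof -
  obtain n P where "n > 0" "smult (of_int n) (map_poly (of_rat::rat\<Rightarrow>complex) p) = map_poly of_int P"
    using rat_poly_clear by blast
  then show ?thesis by (metis poly_smult)
qed

lemma Qfield_frac:
  assumes "c \<in> Qfield z"
  shows "\<exists>A\<in>Zring z. \<exists>B\<in>Zring z. B \<noteq> 0 \<and> c * B = A"
proof -
  obtain p q where pq: "poly (map_poly of_rat q) z \<noteq> 0" "c = poly (map_poly of_rat p) z / poly (map_poly of_rat q) z"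
    using assms unfolding Qfield_def by blast
  obtain n P where nP: "n > 0" "of_int n * poly (map_poly (of_rat::rat\<Rightarrow>complex) p) z = poly (map_poly of_int P) z"
    using poly_clear by blast
  obtain m Q where mQ: "m > 0" "of_int m * poly (map_poly (of_rat::rat\<Rightarrow>complex) q) z = poly (map_poly of_int Q) z"
    using poly_clear by blast
  define A where "A = poly (map_poly of_int P) z * of_int m"
  define B where "B = poly (map_poly of_int Q) z * of_int n"
  have "poly (map_poly of_int P) z \<in> Zring z" "poly (map_poly of_int Q) z \<in> Zring z"
    unfolding Zring_def by blast+
  then have "A \<in> Zring z" "B \<in> Zring z" unfolding A_def B_def
    by (auto intro!: Zring_mult Zring_of_int)
  moreover have "B \<noteq> 0" using pq(1) nP(1) mQ(1) mQ(2)[symmetric] by (simp add: B_def)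
  moreover have "c * B = A"
    using pq(1) nP mQ unfolding A_def B_def pq(2) by (simp add: field_simps) (metis mult.commute mult.left_commute)
  ultimately show ?thesis by blast
qed


lemma frac_cancel: assumes "(y::'a::division_ring) \<noteq> 0" "w \<noteq> 0" shows "(x * w) * inverse (y * w) = x * inverse y"
proof -
  have "(x * w) * inverse (y * w) = (x * w) * (inverse w * inverse y)"
    by (simp only: nonzero_inverse_mult_distrib[OF assms(1,2)])
  also have "\<dots> = x * (w * inverse w) * inverse y" by (simp only: mult.assoc)
  also have "\<dots> = x * inverse y" using assms by simp
  finally show ?thesis .
qed

context frame2
begin

lemma frac_T: "\<exists>ta\<in>T. \<exists>tb\<in>T. tb \<noteq> 0 \<and> x = ta * inverse tb"
  using frac[of x] torus_image_T by blast

lemma ore: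
  assumes "tb \<in> T" "tb' \<in> T" "tb \<noteq> 0" "tb' \<noteq> 0"
  shows "\<exists>u\<in>T. \<exists>u'\<in>T. u \<noteq> 0 \<and> u' \<noteq> 0 \<and> tb * u = tb' * u'"
proof -
  obtain u u' where u: "u \<in> T" "u' \<in> T" "u' \<noteq> 0" "inverse tb * tb' = u * inverse u'"
    using frac_T[of "inverse tb * tb'"] by blast
  have "tb * u = tb * (u * inverse u' * u')" using u(3) by (simp add: mult.assoc)
  also have "\<dots> = tb * (inverse tb * tb') * u'" by (simp add: u(4) mult.assoc)
  also have "\<dots> = tb' * u'" using assms(3) by (simp add: mult.assoc[symmetric])
  finally have e: "tb * u = tb' * u'" .
  then have "u \<noteq> 0" using assms(4) u(3) by auto
  then show ?thesis using u e by blast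
qed

lemma wd:
  assumes T: "ta \<in> T" "tb \<in> T" "ta' \<in> T" "tb' \<in> T" and nz: "tb \<noteq> 0" "tb' \<noteq> 0"
    and eq: "ta * inverse tb = ta' * inverse tb'"
  shows "\<phi> ta * inverse (\<phi> tb) = \<phi> ta' * inverse (\<phi> tb')"
proof -
  obtain u u' where u: "u \<in> T" "u' \<in> T" "u \<noteq> 0" "u' \<noteq> 0" "tb * u = tb' * u'"
    using ore[OF T(2,4) nz] by blast
  have "ta * u = ta * inverse tb * (tb * u)" using nz by (simp add: mult.assoc cancel_l)
  also have "\<dots> = ta' * inverse tb' * (tb' * u')" by (simp add: eq u(5))
  also have "\<dots> = ta' * u'" using nz by (simp add: mult.assoc cancel_l)
  finally have au: "ta * u = ta' * u'" .
  have pb: "\<phi> tb * \<phi> u = \<phi> tb' * \<phi> u'" using u T by (simp add: \<phi>_mult[symmetric])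
  have pa: "\<phi> ta * \<phi> u = \<phi> ta' * \<phi> u'" using u T au by (simp add: \<phi>_mult[symmetric])
  have n1: "\<phi> tb \<noteq> 0" "\<phi> tb' \<noteq> 0" "\<phi> u \<noteq> 0" "\<phi> u' \<noteq> 0" using \<phi>_nz T u nz by auto
  have "\<phi> ta * inverse (\<phi> tb) = (\<phi> ta * \<phi> u) * inverse (\<phi> tb * \<phi> u)" using n1 by (simp add: frac_cancel)
  also have "\<dots> = (\<phi> ta' * \<phi> u') * inverse (\<phi> tb' * \<phi> u')" by (simp add: pa pb)
  also have "\<dots> = \<phi> ta' * inverse (\<phi> tb')" using n1 by (simp add: frac_cancel)
  finally show ?thesis .
qed

definition \<rho> :: "'a \<Rightarrow> 'a" where
  "\<rho> x = (let p = (SOME p. fst p \<in> T \<and> snd p \<in> T \<and> snd p \<noteq> 0 \<and> x = fst p * inverse (snd p))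
           in \<phi> (fst p) * inverse (\<phi> (snd p)))"

lemma \<rho>_frac: assumes "ta \<in> T" "tb \<in> T" "tb \<noteq> 0" shows "\<rho> (ta * inverse tb) = \<phi> ta * inverse (\<phi> tb)"
proof -
  let ?P = "\<lambda>p. fst p \<in> T \<and> snd p \<in> T \<and> snd p \<noteq> 0 \<and> ta * inverse tb = fst p * inverse (snd p)"
  have "?P (ta, tb)" using assms by simp
  then have P: "?P (SOME p. ?P p)" by (rule someI)
  define p where "p = (SOME p. ?P p)"
  have P': "?P p" using P by (simp add: p_def)
  have "\<phi> (fst p) * inverse (\<phi> (snd p)) = \<phi> ta * inverse (\<phi> tb)"
    by (rule wd) (use P' assms in auto)
  moreover have "\<rho> (ta * inverse tb) = \<phi> (fst p) * inverse (\<phi> (snd p))"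
    unfolding \<rho>_def Let_def p_def by (rule refl)
  ultimately show ?thesis by simp
qed

lemma \<rho>_T: "t \<in> T \<Longrightarrow> \<rho> t = \<phi> t"
proof -
  assume t: "t \<in> T"
  have "\<rho> (t * inverse 1) = \<phi> t * inverse (\<phi> 1)" by (rule \<rho>_frac[OF t T_1]) simp
  then show ?thesis by (simp only: \<phi>_1 inverse_1 mult_1_right)
qed

lemma \<rho>_add: "\<rho> (x + y) = \<rho> x + \<rho> y"
proof -
  obtain ta tb where ab: "ta \<in> T" "tb \<in> T" "tb \<noteq> 0" "x = ta * inverse tb" using frac_T by blast
  obtain ta' tb' where ab': "ta' \<in> T" "tb' \<in> T" "tb' \<noteq> 0" "y = ta' * inverse tb'" using frac_T by blast
  obtain u u' where u: "u \<in> T" "u' \<in> T" "u \<noteq> 0" "u' \<noteq> 0" "tb * u = tb' * u'"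
    using ore[OF ab(2) ab'(2) ab(3) ab'(3)] by blast
  define D where "D = tb * u"
  have DT: "D \<in> T" "D \<noteq> 0" unfolding D_def using T_mult[OF ab(2) u(1)] ab(3) u(3) by auto
  have x: "x = (ta * u) * inverse D" unfolding D_def frac_cancel[OF ab(3) u(3)] by (rule ab(4))
  have y: "y = (ta' * u') * inverse D" unfolding D_def u(5) frac_cancel[OF ab'(3) u(4)] by (rule ab'(4))
  have xy: "x + y = (ta * u + ta' * u') * inverse D" by (simp add: x y distrib_right)
  have T2: "ta * u \<in> T" "ta' * u' \<in> T" using ab ab' u by (auto intro: T_mult)
  have "\<rho> (x + y) = \<phi> (ta * u + ta' * u') * inverse (\<phi> D)" unfolding xy by (rule \<rho>_frac[OF T_add[OF T2] DT])
  also have "\<dots> = \<phi> (ta * u) * inverse (\<phi> D) + \<phi> (ta' * u') * inverse (\<phi> D)"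
    using T2 by (simp add: \<phi>_add distrib_right)
  also have "\<dots> = \<rho> x + \<rho> y" unfolding x y \<rho>_frac[OF T2(1) DT] \<rho>_frac[OF T2(2) DT] ..
  finally show ?thesis .
qed

lemma \<rho>_mult: "\<rho> (x * y) = \<rho> x * \<rho> y"
proof -
  obtain ta tb where ab: "ta \<in> T" "tb \<in> T" "tb \<noteq> 0" "x = ta * inverse tb" using frac_T by blast
  obtain ta' tb' where ab': "ta' \<in> T" "tb' \<in> T" "tb' \<noteq> 0" "y = ta' * inverse tb'" using frac_T by blast
  obtain v w where vw: "v \<in> T" "w \<in> T" "w \<noteq> 0" "inverse tb * ta' = v * inverse w"
    using frac_T[of "inverse tb * ta'"] by blast
  have aw: "ta' * w = tb * v"
  proof -
    have "ta' * w = tb * (inverse tb * ta') * w" using ab(3) by (simp add: mult.assoc[symmetric])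
    also have "\<dots> = tb * v" using vw by (simp add: mult.assoc)
    finally show ?thesis .
  qed
  have xy: "x * y = (ta * v) * inverse (tb' * w)"
  proof -
    have "x * y = ta * (inverse tb * ta') * inverse tb'" by (simp add: ab ab' mult.assoc)
    also have "\<dots> = ta * v * (inverse w * inverse tb')" by (simp add: vw mult.assoc)
    also have "\<dots> = (ta * v) * inverse (tb' * w)" using vw ab' by (simp add: nonzero_inverse_mult_distrib)
    finally show ?thesis .
  qed
  have n1: "\<phi> tb \<noteq> 0" "\<phi> tb' \<noteq> 0" "\<phi> w \<noteq> 0" using \<phi>_nz ab ab' vw by auto
  have paw: "\<phi> ta' * \<phi> w = \<phi> tb * \<phi> v" using aw ab ab' vw by (simp add: \<phi>_mult[symmetric])
  have key: "inverse (\<phi> tb) * \<phi> ta' = \<phi> v * inverse (\<phi> w)"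
  proof -
    have "inverse (\<phi> tb) * \<phi> ta' = inverse (\<phi> tb) * (\<phi> ta' * \<phi> w) * inverse (\<phi> w)"
      using n1 by (simp add: mult.assoc)
    also have "\<dots> = \<phi> v * inverse (\<phi> w)" using n1 by (simp add: paw mult.assoc[symmetric])
    finally show ?thesis .
  qed
  have "\<rho> (x * y) = \<phi> (ta * v) * inverse (\<phi> (tb' * w))"
    using xy \<rho>_frac ab ab' vw by (simp add: T_mult)
  also have "\<dots> = \<phi> ta * \<phi> v * (inverse (\<phi> w) * inverse (\<phi> tb'))"
    using ab ab' vw n1 by (simp add: \<phi>_mult nonzero_inverse_mult_distrib)
  also have "\<dots> = \<phi> ta * (inverse (\<phi> tb) * \<phi> ta') * inverse (\<phi> tb')" by (simp add: key mult.assoc)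
  also have "\<dots> = \<rho> x * \<rho> y" using ab ab' by (simp add: \<rho>_frac mult.assoc)
  finally show ?thesis .
qed

lemma \<rho>_1: "\<rho> 1 = 1" using \<rho>_T[OF T_1] by (simp add: \<phi>_1)
lemma \<rho>_0: "\<rho> 0 = 0" using \<rho>_add[of 0 0] by simp
lemma \<rho>_uminus: "\<rho> (- x) = - \<rho> x" using \<rho>_add[of x "- x"] \<rho>_0 by (metis add.commute eq_neg_iff_add_eq_0 right_minus)
lemma \<rho>_inverse: "\<rho> (inverse x) = inverse (\<rho> x)"
proof (cases "x = 0")
  case True then show ?thesis by (simp add: \<rho>_0)
next
  case False
  then have "\<rho> x * \<rho> (inverse x) = 1" by (simp add: \<rho>_mult[symmetric] \<rho>_1)
  then show ?thesis by (metis inverse_unique)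
qed

lemma \<rho>_M: "\<rho> (M f) = Y f" by (simp add: \<rho>_T T_M \<phi>_M)

lemma \<rho>_iota_Z: "c \<in> Zring z \<Longrightarrow> \<rho> (\<iota> c) = \<iota> c" by (simp add: \<rho>_T T_iota \<phi>_iota)

lemma \<rho>_iota: assumes "c \<in> Qfield z" shows "\<rho> (\<iota> c) = \<iota> c"
proof -
  obtain A B where AB: "A \<in> Zring z" "B \<in> Zring z" "B \<noteq> 0" "c * B = A" using Qfield_frac[OF assms] by blast
  have "\<iota> (c * B) = \<iota> c * \<iota> B" using Kalg assms Zring_Qfield[OF AB(2)] unfolding K_algebra_def by blast
  then have e: "\<iota> A = \<iota> c * \<iota> B" using AB by simp
  have nB: "\<iota> B \<noteq> 0" using \<iota>_nz AB by blast
  then have "\<iota> c = \<iota> A * inverse (\<iota> B)" by (simp add: e mult.assoc)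
  then show ?thesis using AB by (simp add: \<rho>_mult \<rho>_inverse \<rho>_iota_Z)
qed

end


context frame2
begin

lemma rg_mult: "x \<in> range \<rho> \<Longrightarrow> y \<in> range \<rho> \<Longrightarrow> x * y \<in> range \<rho>"
  by (auto simp flip: \<rho>_mult)
lemma rg_add: "x \<in> range \<rho> \<Longrightarrow> y \<in> range \<rho> \<Longrightarrow> x + y \<in> range \<rho>"
  by (auto simp flip: \<rho>_add)
lemma rg_inv: "x \<in> range \<rho> \<Longrightarrow> inverse x \<in> range \<rho>"
  by (auto simp flip: \<rho>_inverse)
lemma rg_iota: "c \<in> Zring z \<Longrightarrow> \<iota> c \<in> range \<rho>"
  by (metis \<rho>_iota_Z rangeI)
lemma rg_1: "1 \<in> range \<rho>" by (metis \<rho>_1 rangeI)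

lemma rg_M0: "f k = 0 \<Longrightarrow> M f \<in> range \<rho>"
  by (metis \<rho>_M Y_k0 rangeI)

lemma rg_Q0: "Q 0 \<in> range \<rho>"
  unfolding Q_def X_def by (intro rg_add rg_1 rg_mult rg_iota Zring_powi rg_M0 h_k)

lemma ebasis_ek: "ebasis k = ek 1" by (simp add: ebasis_def ek_def fun_eq_iff)

lemma rg_Mek1: "M (ek 1) \<in> range \<rho>"
proof -
  have "\<rho> (M (ebasis k)) = M (ebasis k) * Q 0" by (simp add: \<rho>_M Y_def ebasis_def R_1)
  then have "M (ebasis k) = \<rho> (M (ebasis k)) * inverse (Q 0)" by (simp add: Q_nz mult.assoc)
  then have "M (ebasis k) \<in> range \<rho>" by (metis rg_mult rg_inv rg_Q0 rangeI)
  then show ?thesis by (simp add: ebasis_ek)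
qed

lemma rg_M_add: "M f \<in> range \<rho> \<Longrightarrow> M f' \<in> range \<rho> \<Longrightarrow> M (f + f') \<in> range \<rho>"
  by (simp add: M_add rg_mult rg_iota Zring_powi)

lemma M_neg: "M (- f) = inverse (M f) * \<iota> (z powi \<Lambda> f (- f))"
proof -
  have "M f * M (- f) = \<iota> (z powi \<Lambda> f (- f))" by (simp add: Mmult M0)
  then show ?thesis by (metis M_nz cancel_l)
qed

lemma rg_M_neg: "M f \<in> range \<rho> \<Longrightarrow> M (- f) \<in> range \<rho>"
  by (simp add: M_neg rg_mult rg_inv rg_iota Zring_powi)

lemma rg_Mek: "M (ek m) \<in> range \<rho>"
proof (induction m rule: int_induct[where k = 0])
  case base
  have "ek 0 = 0" by (simp add: ek_def fun_eq_iff)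
  then show ?case using rg_1 by (simp only: M0)
next
  case (step1 i)
  have e: "ek (i + 1) = ek i + ek 1" by (simp add: ek_def fun_eq_iff)
  show ?case unfolding e by (rule rg_M_add[OF step1(2) rg_Mek1])
next
  case (step2 i)
  have e: "ek (i - 1) = ek i + - ek 1" by (simp add: ek_def fun_eq_iff)
  show ?case unfolding e by (rule rg_M_add[OF step2(2) rg_M_neg[OF rg_Mek1]])
qed

lemma rg_M: "M f \<in> range \<rho>"
proof -
  have "f = (f - ek (f k)) + ek (f k)" by simp
  moreover have "M (f - ek (f k)) \<in> range \<rho>" by (rule rg_M0) simp
  ultimately show ?thesis using rg_M_add[OF _ rg_Mek] by metis
qed

lemma rg_vl: "valid xs \<Longrightarrow> vl M xs \<in> range \<rho>"
proof (induction xs)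
  case Nil then show ?case by (metis \<rho>_0 rangeI vl_Nil)
next
  case (Cons p xs)
  then show ?case by (simp add: rg_add rg_mult rg_iota rg_M)
qed

lemma \<rho>_surj: "surj \<rho>"
proof -
  have "x \<in> range \<rho>" for x
  proof -
    obtain ta tb where "ta \<in> T" "tb \<in> T" "x = ta * inverse tb" using frac_T by blast
    then show ?thesis unfolding T_def by (auto intro!: rg_mult rg_inv rg_vl)
  qed
  then show ?thesis by blast
qed

lemma \<rho>_inj: "inj \<rho>"
proof (rule injI)
  fix x y assume e: "\<rho> x = \<rho> y"
  show "x = y"
  proof (rule ccontr)
    assume "x \<noteq> y"
    then have nz: "x - y \<noteq> 0" by simp
    have "\<rho> (x - y) = 0" using e \<rho>_add[of x "- y"] \<rho>_uminus[of y] by simp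
    then have "\<rho> ((x - y) * inverse (x - y)) = 0" by (simp add: \<rho>_mult)
    then show False using nz \<rho>_1 by simp
  qed
qed

lemma \<rho>_aut: "K_alg_automorphism z \<iota> \<rho>"
  unfolding K_alg_automorphism_def
  using \<rho>_inj \<rho>_surj \<rho>_1 \<rho>_add \<rho>_mult \<rho>_iota by (simp add: bij_def)

end

context frame
begin

lemma frac_T': "\<exists>ta\<in>T. \<exists>tb\<in>T. tb \<noteq> 0 \<and> x = ta * inverse tb"
  using frac[of x] torus_image_T by blast

lemma aut_0: "K_alg_automorphism z \<iota> \<sigma> \<Longrightarrow> \<sigma> 0 = 0"
  unfolding K_alg_automorphism_def by (metis add_cancel_right_right add_0)
lemma aut_inverse: assumes "K_alg_automorphism z \<iota> \<sigma>" shows "\<sigma> (inverse x) = inverse (\<sigma> x)"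
proof (cases "x = 0")
  case True then show ?thesis using aut_0[OF assms] by simp
next
  case False
  then have "\<sigma> x * \<sigma> (inverse x) = 1" using assms unfolding K_alg_automorphism_def by (metis right_inverse)
  then show ?thesis by (metis inverse_unique)
qed
lemma aut_iota: "K_alg_automorphism z \<iota> \<sigma> \<Longrightarrow> c \<in> Zring z \<Longrightarrow> \<sigma> (\<iota> c * x) = \<iota> c * \<sigma> x"
  unfolding K_alg_automorphism_def using Zring_Qfield by blast
lemma aut_1: "K_alg_automorphism z \<iota> \<sigma> \<Longrightarrow> \<sigma> 1 = 1"
  unfolding K_alg_automorphism_def by blast
lemma aut_iota1: "K_alg_automorphism z \<iota> \<sigma> \<Longrightarrow> c \<in> Zring z \<Longrightarrow> \<sigma> (\<iota> c) = \<iota> c"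
proof -
  assume a: "K_alg_automorphism z \<iota> \<sigma>" "c \<in> Zring z"
  have "\<sigma> (\<iota> c * 1) = \<iota> c * \<sigma> 1" by (rule aut_iota[OF a])
  then show ?thesis using aut_1[OF a(1)] by simp
qed
lemma aut_mult: "K_alg_automorphism z \<iota> \<sigma> \<Longrightarrow> \<sigma> (x * y) = \<sigma> x * \<sigma> y"
  unfolding K_alg_automorphism_def by blast
lemma aut_add: "K_alg_automorphism z \<iota> \<sigma> \<Longrightarrow> \<sigma> (x + y) = \<sigma> x + \<sigma> y"
  unfolding K_alg_automorphism_def by blast

lemma M_neg': "M (- f) = \<iota> (z powi \<Lambda> f (- f)) * inverse (M f)"
proof -
  have "M f * M (- f) = \<iota> (z powi \<Lambda> f (- f))" by (simp add: Mmult M0)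
  then have "M (- f) = inverse (M f) * \<iota> (z powi \<Lambda> f (- f))"
    by (metis M_nz mult.assoc left_inverse mult_1_left)
  then show ?thesis using \<iota>_central[OF Zring_powi] by metis
qed

lemma aut_agree:
  assumes s1: "K_alg_automorphism z \<iota> \<sigma>1" and s2: "K_alg_automorphism z \<iota> \<sigma>2"
    and ej: "\<And>j. \<sigma>1 (M (ebasis j)) = \<sigma>2 (M (ebasis j))"
  shows "\<sigma>1 = \<sigma>2"
proof -
  define G where "G = {f. \<sigma>1 (M f) = \<sigma>2 (M f)}"
  have G0: "0 \<in> G" using aut_1[OF s1] aut_1[OF s2] by (simp add: G_def M0)
  have Gadd: "f + f' \<in> G" if "f \<in> G" "f' \<in> G" for f f'
    using that by (simp add: G_def M_add aut_iota1[OF s1] aut_iota1[OF s2] aut_mult[OF s1] aut_mult[OF s2] Zring_powi)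
  have Gneg: "- f \<in> G" if "f \<in> G" for f
    using that by (simp add: G_def M_neg' aut_iota1[OF s1] aut_iota1[OF s2] aut_mult[OF s1] aut_mult[OF s2] aut_inverse[OF s1] aut_inverse[OF s2] Zring_powi)
  have Gsm: "(\<lambda>i. n * f i) \<in> G" if "f \<in> G" for f n
  proof (induction n rule: int_induct[where k = 0])
    case base
    have "(\<lambda>i. 0 * f i) = 0" by (simp add: fun_eq_iff)
    then show ?case using G0 by simp
  next
    case (step1 i)
    have "(\<lambda>j. (i + 1) * f j) = (\<lambda>j. i * f j) + f" by (simp add: fun_eq_iff algebra_simps)
    then show ?case using Gadd[OF step1(2) that] by simp
  next
    case (step2 i)
    have "(\<lambda>j. (i - 1) * f j) = (\<lambda>j. i * f j) + - f" by (simp add: fun_eq_iff algebra_simps)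
    then show ?case using Gadd[OF step2(2) Gneg[OF that]] by simp
  qed
  have Gsum: "finite A \<Longrightarrow> (\<forall>j\<in>A. F j \<in> G) \<Longrightarrow> sum F A \<in> G" for A F
    by (induction A rule: finite_induct) (auto simp: G0 Gadd)
  have Gall: "f \<in> G" for f
  proof -
    have Gej: "ebasis j \<in> G" for j by (simp add: G_def ej)
    have "(\<Sum>j\<in>UNIV. (\<lambda>i. f j * ebasis j i)) \<in> G"
      by (rule Gsum) (auto intro: Gsm Gej)
    then show ?thesis using fun_decomp[of f] by simp
  qed
  have Tvl: "\<sigma>1 (vl M xs) = \<sigma>2 (vl M xs)" if "valid xs" for xs
    using that
  proof (induction xs)
    case Nil then show ?case using aut_0[OF s1] aut_0[OF s2] by simp
  next
    case (Cons p xs)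
    then show ?case using Gall[of "snd p"]
      by (simp add: aut_add[OF s1] aut_add[OF s2] aut_iota[OF s1] aut_iota[OF s2] G_def)
  qed
  show ?thesis
  proof
    fix x
    obtain ta tb where "ta \<in> T" "tb \<in> T" "x = ta * inverse tb" using frac_T' by blast
    then show "\<sigma>1 x = \<sigma>2 x" unfolding T_def
      by (auto simp: aut_mult[OF s1] aut_mult[OF s2] aut_inverse[OF s1] aut_inverse[OF s2] Tvl)
  qed
qed

end

theorem proposition3p5:
  fixes l :: nat and z :: complex and \<iota> :: "complex \<Rightarrow> 'a::division_ring"
    and M :: "('n::finite \<Rightarrow> int) \<Rightarrow> 'a" and \<Lambda> :: "('n \<Rightarrow> int) \<Rightarrow> ('n \<Rightarrow> int) \<Rightarrow> int"
    and k :: 'n and g :: "'n \<Rightarrow> int" and s :: int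
  assumes "0 < l"
    and "primitive_root_of_unity l z"
    and "K_algebra z \<iota>"
    and "toric_frame l z \<iota> M \<Lambda>"
    and "\<forall>j. j \<noteq> k \<longrightarrow> [\<Lambda> g (ebasis j) = 0] (mod int l)"
    and "g k = 0"
    and "s \<in> {1, -1}"
  shows "\<exists>!\<rho>. K_alg_automorphism z \<iota> \<rho> \<and>
           \<rho> (M (ebasis k)) = M (ebasis k) + M (ebasis k + (\<lambda>i. s * g i)) \<and>
           (\<forall>j. j \<noteq> k \<longrightarrow> \<rho> (M (ebasis j)) = M (ebasis j))"
proof -
  interpret F: frame2 l z \<iota> M \<Lambda> k g s
    by unfold_locales (use assms in auto)
  have h: "F.h = (\<lambda>i. s * g i)" by (simp add: F.h_def)
  have P: "K_alg_automorphism z \<iota> F.\<rho> \<and>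
           F.\<rho> (M (ebasis k)) = M (ebasis k) + M (ebasis k + (\<lambda>i. s * g i)) \<and>
           (\<forall>j. j \<noteq> k \<longrightarrow> F.\<rho> (M (ebasis j)) = M (ebasis j))"
    using F.\<rho>_aut F.\<rho>_M F.Y_ek F.Y_ej h by simp
  show ?thesis
  proof (rule ex1I[of _ F.\<rho>])
    show "K_alg_automorphism z \<iota> F.\<rho> \<and>
           F.\<rho> (M (ebasis k)) = M (ebasis k) + M (ebasis k + (\<lambda>i. s * g i)) \<and>
           (\<forall>j. j \<noteq> k \<longrightarrow> F.\<rho> (M (ebasis j)) = M (ebasis j))" by (rule P)
  next
    fix \<sigma>
    assume Q: "K_alg_automorphism z \<iota> \<sigma> \<and>
           \<sigma> (M (ebasis k)) = M (ebasis k) + M (ebasis k + (\<lambda>i. s * g i)) \<and>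
           (\<forall>j. j \<noteq> k \<longrightarrow> \<sigma> (M (ebasis j)) = M (ebasis j))"
    show "\<sigma> = F.\<rho>"
    proof (rule F.aut_agree)
      show "K_alg_automorphism z \<iota> \<sigma>" using Q by blast
      show "K_alg_automorphism z \<iota> F.\<rho>" using P by blast
      show "\<sigma> (M (ebasis j)) = F.\<rho> (M (ebasis j))" for j
        using P Q by (cases "j = k") auto
    qed
  qed
qed

end
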